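(* Let $T$ be a tree that is not a path. Then the following statements are equivalent: (i) $\gamma_M(T)=\dim(T)+\gamma(T)$; (ii) $\dim(T)=\ell'(T)-|\mathcal S'(T)|$; (iii) every exterior major vertex $u$ of $T$ with $\mathrm{ter}(u)\ge 2$ is adjacent to each of its terminal vertices; (iv) every path joining two leaves of $T$ that are at distance greater than $2$ contains at least two major vertices.
   Context: All graphs are finite, simple, undirected and connected, with at least 2 vertices; $d(u,v)$ is the shortest-path distance. A set $S\subseteq V(G)$ is a resolving set if for all $x,y\in V(G)$ with $x\ne y$ there is $u\in S$ with $d(u,x)\neq d(u,y)$; $\dim(G)$ is the minimum size of a resolving set. A set $S$ is dominating if every vertex not in $S$ has a neighbor in $S$; $\gamma(G)$ is the minimum size of a dominating set. A metric-locating-dominating set (MLD-set) is a set that is both resolving and dominating; $\gamma_M(G)$ is the minimum size of an MLD-set. In a tree $T$: a leaf is a vertex of degree 1; a support vertex is a vertex adjacent to a leaf; a strong support vertex is a vertex adjacent to at least two leaves; $\mathcal S'(T)$ is the set of strong support vertices; $\ell'(T)$ is the number of leaves adjacent to a strong support vertex. A major vertex is a vertex of degree at least 3. A leaf $x$ is a terminal vertex of a major vertex $u$ if $u$ is the major vertex closest to $x$; $\mathrm{ter}(u)$ is the number of terminal vertices of $u$; $u$ is an exterior major vertex if $\mathrm{ter}(u)\ge 1$. *)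

theory Defs
  imports Main
begin

definition graph :: "'a set \<Rightarrow> ('a \<Rightarrow> 'a \<Rightarrow> bool) \<Rightarrow> bool" where
  "graph V E \<longleftrightarrow> finite V \<and> card V \<ge> 2 \<and>
     (\<forall>x y. E x y \<longrightarrow> x \<in> V \<and> y \<in> V) \<and>
     (\<forall>x y. E x y \<longrightarrow> E y x) \<and> (\<forall>x. \<not> E x x)"

definition walk :: "'a set \<Rightarrow> ('a \<Rightarrow> 'a \<Rightarrow> bool) \<Rightarrow> 'a list \<Rightarrow> bool" where
  "walk V E p \<longleftrightarrow> p \<noteq> [] \<and> set p \<subseteq> V \<and> (\<forall>i. Suc i < length p \<longrightarrow> E (p ! i) (p ! Suc i))"

definition path_between :: "'a set \<Rightarrow> ('a \<Rightarrow> 'a \<Rightarrow> bool) \<Rightarrow> 'a \<Rightarrow> 'a \<Rightarrow> 'a list \<Rightarrow> bool" where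
  "path_between V E u v p \<longleftrightarrow> walk V E p \<and> distinct p \<and> hd p = u \<and> last p = v"

definition connected_graph :: "'a set \<Rightarrow> ('a \<Rightarrow> 'a \<Rightarrow> bool) \<Rightarrow> bool" where
  "connected_graph V E \<longleftrightarrow> graph V E \<and> (\<forall>u\<in>V. \<forall>v\<in>V. \<exists>p. path_between V E u v p)"

definition is_cycle :: "'a set \<Rightarrow> ('a \<Rightarrow> 'a \<Rightarrow> bool) \<Rightarrow> 'a list \<Rightarrow> bool" where
  "is_cycle V E c \<longleftrightarrow> walk V E c \<and> distinct c \<and> length c \<ge> 3 \<and> E (last c) (hd c)"

definition tree :: "'a set \<Rightarrow> ('a \<Rightarrow> 'a \<Rightarrow> bool) \<Rightarrow> bool" where
  "tree V E \<longleftrightarrow> connected_graph V E \<and> (\<nexists>c. is_cycle V E c)"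

definition is_path_graph :: "'a set \<Rightarrow> ('a \<Rightarrow> 'a \<Rightarrow> bool) \<Rightarrow> bool" where
  "is_path_graph V E \<longleftrightarrow> (\<exists>p. distinct p \<and> set p = V \<and>
     (\<forall>x y. E x y \<longleftrightarrow> (\<exists>i. Suc i < length p \<and>
        ((p ! i = x \<and> p ! Suc i = y) \<or> (p ! i = y \<and> p ! Suc i = x)))))"

definition dist :: "'a set \<Rightarrow> ('a \<Rightarrow> 'a \<Rightarrow> bool) \<Rightarrow> 'a \<Rightarrow> 'a \<Rightarrow> nat" where
  "dist V E u v = (LEAST n. \<exists>p. walk V E p \<and> hd p = u \<and> last p = v \<and> length p = Suc n)"

definition resolving :: "'a set \<Rightarrow> ('a \<Rightarrow> 'a \<Rightarrow> bool) \<Rightarrow> 'a set \<Rightarrow> bool" where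
  "resolving V E S \<longleftrightarrow> S \<subseteq> V \<and>
     (\<forall>x\<in>V. \<forall>y\<in>V. x \<noteq> y \<longrightarrow> (\<exists>u\<in>S. dist V E u x \<noteq> dist V E u y))"

definition dominating :: "'a set \<Rightarrow> ('a \<Rightarrow> 'a \<Rightarrow> bool) \<Rightarrow> 'a set \<Rightarrow> bool" where
  "dominating V E S \<longleftrightarrow> S \<subseteq> V \<and> (\<forall>x\<in>V - S. \<exists>u\<in>S. E x u)"

definition metric_dim :: "'a set \<Rightarrow> ('a \<Rightarrow> 'a \<Rightarrow> bool) \<Rightarrow> nat" where
  "metric_dim V E = (LEAST k. \<exists>S. resolving V E S \<and> card S = k)"

definition domination_number :: "'a set \<Rightarrow> ('a \<Rightarrow> 'a \<Rightarrow> bool) \<Rightarrow> nat" where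
  "domination_number V E = (LEAST k. \<exists>S. dominating V E S \<and> card S = k)"

definition mld_number :: "'a set \<Rightarrow> ('a \<Rightarrow> 'a \<Rightarrow> bool) \<Rightarrow> nat" where
  "mld_number V E = (LEAST k. \<exists>S. resolving V E S \<and> dominating V E S \<and> card S = k)"

definition degree :: "'a set \<Rightarrow> ('a \<Rightarrow> 'a \<Rightarrow> bool) \<Rightarrow> 'a \<Rightarrow> nat" where
  "degree V E v = card {u\<in>V. E v u}"

definition leaf :: "'a set \<Rightarrow> ('a \<Rightarrow> 'a \<Rightarrow> bool) \<Rightarrow> 'a \<Rightarrow> bool" where
  "leaf V E x \<longleftrightarrow> x \<in> V \<and> degree V E x = 1"

definition strong_support :: "'a set \<Rightarrow> ('a \<Rightarrow> 'a \<Rightarrow> bool) \<Rightarrow> 'a \<Rightarrow> bool" where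
  "strong_support V E s \<longleftrightarrow> s \<in> V \<and> card {x. leaf V E x \<and> E s x} \<ge> 2"

definition strong_supports :: "'a set \<Rightarrow> ('a \<Rightarrow> 'a \<Rightarrow> bool) \<Rightarrow> 'a set" where
  "strong_supports V E = {s. strong_support V E s}"

definition ell' :: "'a set \<Rightarrow> ('a \<Rightarrow> 'a \<Rightarrow> bool) \<Rightarrow> nat" where
  "ell' V E = card {x. leaf V E x \<and> (\<exists>s. strong_support V E s \<and> E s x)}"

definition major :: "'a set \<Rightarrow> ('a \<Rightarrow> 'a \<Rightarrow> bool) \<Rightarrow> 'a \<Rightarrow> bool" where
  "major V E v \<longleftrightarrow> v \<in> V \<and> degree V E v \<ge> 3"

definition terminal :: "'a set \<Rightarrow> ('a \<Rightarrow> 'a \<Rightarrow> bool) \<Rightarrow> 'a \<Rightarrow> 'a \<Rightarrow> bool" where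
  "terminal V E u x \<longleftrightarrow> leaf V E x \<and> major V E u \<and>
     (\<forall>w. major V E w \<and> w \<noteq> u \<longrightarrow> dist V E x u < dist V E x w)"

definition ter :: "'a set \<Rightarrow> ('a \<Rightarrow> 'a \<Rightarrow> bool) \<Rightarrow> 'a \<Rightarrow> nat" where
  "ter V E u = card {x. terminal V E u x}"

definition exterior_major :: "'a set \<Rightarrow> ('a \<Rightarrow> 'a \<Rightarrow> bool) \<Rightarrow> 'a \<Rightarrow> bool" where
  "exterior_major V E u \<longleftrightarrow> major V E u \<and> ter V E u \<ge> 1"

end

theory Submission
  imports Defs
begin


lemma walk_succ: "walk V E p \<longleftrightarrow> p \<noteq> [] \<and> set p \<subseteq> V \<and> successively E p"
  unfolding walk_def successively_conv_nth by blast

lemma walkD: "walk V E p \<Longrightarrow> p \<noteq> [] \<and> set p \<subseteq> V \<and> successively E p"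
  by (simp add: walk_succ)

locale tr =
  fixes V :: "'a set" and E :: "'a \<Rightarrow> 'a \<Rightarrow> bool"
  assumes tree: "tree V E"
begin

abbreviation d where "d \<equiv> dist V E"

lemma graphV: "graph V E" using tree unfolding tree_def connected_graph_def by blast
lemma finV: "finite V" using graphV unfolding graph_def by blast
lemma cardV: "card V \<ge> 2" using graphV unfolding graph_def by blast
lemma EV: "E x y \<Longrightarrow> x \<in> V \<and> y \<in> V" using graphV unfolding graph_def by blast
lemma Esym: "E x y \<Longrightarrow> E y x" using graphV unfolding graph_def by blast
lemma Eirr: "\<not> E x x" using graphV unfolding graph_def by blast
lemma Ene: "E x y \<Longrightarrow> x \<noteq> y" using Eirr by blast
lemma nocyc: "\<not> is_cycle V E c" using tree unfolding tree_def by blast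
lemma conn: "u \<in> V \<Longrightarrow> v \<in> V \<Longrightarrow> \<exists>p. path_between V E u v p"
  using tree unfolding tree_def connected_graph_def by blast

lemma succ_sym: "successively E (rev p) \<longleftrightarrow> successively E p"
proof -
  have "successively (\<lambda>x y. E y x) p \<longleftrightarrow> successively E p"
    by (rule successively_cong) (auto intro: Esym)
  then show ?thesis by simp
qed

lemma walk_rev: "walk V E p \<Longrightarrow> walk V E (rev p)"
  unfolding walk_succ using succ_sym[of p] by (simp del: successively_rev)

lemma dist_ex:
  assumes "u \<in> V" "v \<in> V"
  shows "\<exists>p. walk V E p \<and> hd p = u \<and> last p = v \<and> length p = Suc (d u v)"
proof -
  obtain p where "path_between V E u v p" using conn assms by blast
  then have "walk V E p \<and> hd p = u \<and> last p = v \<and> length p = Suc (length p - 1)"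
    unfolding path_between_def walk_def by auto
  then have ex: "\<exists>n p. walk V E p \<and> hd p = u \<and> last p = v \<and> length p = Suc n" by blast
  show ?thesis unfolding dist_def by (rule LeastI_ex[OF ex])
qed

lemma dist_le:
  assumes "walk V E p" "hd p = u" "last p = v"
  shows "d u v \<le> length p - 1"
proof -
  have "p \<noteq> []" using assms walk_def by blast
  then have "walk V E p \<and> hd p = u \<and> last p = v \<and> length p = Suc (length p - 1)"
    using assms by auto
  then show ?thesis unfolding dist_def by (intro Least_le) blast
qed

lemma d_refl: "u \<in> V \<Longrightarrow> d u u = 0"
  using dist_le[of "[u]" u u] by (simp add: walk_def)

lemma d_0: assumes "u \<in> V" "v \<in> V" "d u v = 0" shows "u = v"
proof -
  obtain p where "walk V E p" "hd p = u" "last p = v" "length p = Suc (d u v)"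
    using dist_ex assms by blast
  then show ?thesis using assms(3) by (cases p) auto
qed

lemma d_sym: assumes "u \<in> V" "v \<in> V" shows "d u v = d v u"
proof -
  have le: "d x y \<le> d y x" if xy: "x \<in> V" "y \<in> V" for x y
  proof -
    obtain p where p: "walk V E p" "hd p = y" "last p = x" "length p = Suc (d y x)"
      using dist_ex[OF xy(2,1)] by blast
    have "rev p \<noteq> []" using walkD[OF p(1)] by auto
    then have "d x y \<le> length (rev p) - 1"
      using p by (intro dist_le walk_rev) (auto simp: hd_rev last_rev)
    then show ?thesis using p by simp
  qed
  show ?thesis using le[OF assms] le[OF assms(2,1)] by simp
qed

lemma walk_app:
  assumes "walk V E p" "walk V E q" "last p = hd q"
  shows "walk V E (p @ tl q)"
proof -
  have "q \<noteq> []" "p \<noteq> []" using assms walk_def by auto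
  then obtain y q' where q: "q = y # q'" by (cases q) auto
  have "successively E p" "successively E q" using assms walk_succ by auto
  then have "successively E (p @ q')" using q assms(3) \<open>p \<noteq> []\<close>
    by (auto simp: successively_append_iff successively_Cons)
  moreover have "set (p @ q') \<subseteq> V" using assms(1,2)[unfolded walk_succ] q by auto
  ultimately show ?thesis using \<open>p \<noteq> []\<close> q by (simp add: walk_succ)
qed

lemma d_tri: assumes "u \<in> V" "v \<in> V" "w \<in> V" shows "d u w \<le> d u v + d v w"
proof -
  obtain p where p: "walk V E p" "hd p = u" "last p = v" "length p = Suc (d u v)"
    using dist_ex assms by blast
  obtain q where q: "walk V E q" "hd q = v" "last q = w" "length q = Suc (d v w)"
    using dist_ex assms by blast
  have w: "walk V E (p @ tl q)" using walk_app p q by auto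
  have "q \<noteq> []" using walkD[OF q(1)] by auto
  have "hd (p @ tl q) = u" using p walkD[OF p(1)] by auto
  moreover have "last (p @ tl q) = w"
    using q p \<open>q \<noteq> []\<close> by (cases q) (auto)
  ultimately have "d u w \<le> length (p @ tl q) - 1" using dist_le w by blast
  then show ?thesis using p q by simp
qed

lemma d_edge: assumes "E u v" shows "d u v = 1"
proof -
  have "walk V E [u, v]" using assms EV by (auto simp: walk_def nth_Cons split: nat.splits)
  then have "d u v \<le> 1" using dist_le[of "[u,v]"] by simp
  moreover have "d u v \<noteq> 0" using d_0 EV assms Ene by blast
  ultimately show ?thesis by simp
qed

lemma d_1: assumes "u \<in> V" "v \<in> V" "d u v = 1" shows "E u v"
proof -
  obtain p where p: "walk V E p" "hd p = u" "last p = v" "length p = Suc (d u v)"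
    using dist_ex assms by blast
  then obtain a b where "p = [a, b]" using assms(3)
    by (cases p; cases "tl p") auto
  then show ?thesis using p unfolding walk_def by auto
qed

lemma shortest_pos:
  assumes p: "walk V E p" "hd p = u" "last p = v" "length p = Suc (d u v)"
    and i: "i < length p"
  shows "d u (p ! i) = i \<and> d (p ! i) v + i = d u v"
proof -
  have ne: "p \<noteq> []" using walkD[OF p(1)] by auto
  have sV: "set p \<subseteq> V" using walkD[OF p(1)] by auto
  have V: "u \<in> V" "v \<in> V" "p ! i \<in> V" using p(2,3) ne i sV
    by (auto simp: hd_conv_nth last_conv_nth)
  have w1: "walk V E (take (Suc i) p)" using p i unfolding walk_def
    by (auto dest: in_set_takeD)
  have "hd (take (Suc i) p) = u" using p ne by (simp add: hd_take)
  moreover have "last (take (Suc i) p) = p ! i" using i ne by (subst last_conv_nth) (auto simp: min_def intro: arg_cong[where f="(!) p"])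
  ultimately have a: "d u (p!i) \<le> i" using dist_le[OF w1] i by simp
  have w2: "walk V E (drop i p)" using p i unfolding walk_def
    by (auto dest: in_set_dropD)
  have "hd (drop i p) = p ! i" using i by (simp add: hd_drop_conv_nth)
  moreover have "last (drop i p) = v" using p i by simp
  ultimately have b: "d (p!i) v \<le> length p - i - 1" using dist_le[OF w2] i by simp
  have "d u v \<le> d u (p!i) + d (p!i) v" using d_tri V by blast
  then show ?thesis using a b p(4) i by linarith
qed

lemma shortest_distinct:
  assumes p: "walk V E p" "hd p = u" "last p = v" "length p = Suc (d u v)"
  shows "distinct p"
proof (rule ccontr)
  assume "\<not> distinct p"
  then obtain xs ys zs y where pe: "p = xs @ [y] @ ys @ [y] @ zs" using not_distinct_decomp by blast
  let ?q = "xs @ [y] @ zs"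
  have sp: "successively E p" "set p \<subseteq> V" using walkD[OF p(1)] by auto
  have "successively E ?q"
    using sp unfolding pe by (auto simp: successively_append_iff successively_Cons)
  moreover have "set ?q \<subseteq> V" using sp(2) pe by auto
  ultimately have wq: "walk V E ?q" by (auto simp: walk_succ)
  have "hd ?q = u" using p pe by (cases xs) auto
  moreover have "last ?q = v" using p pe by (cases zs) auto
  ultimately have "d u v \<le> length ?q - 1" using dist_le wq by blast
  then show False using p(4) pe by simp
qed

lemma next_hop:
  assumes "a \<in> V" "v \<in> V" "a \<noteq> v"
  shows "\<exists>n. E a n \<and> d n v + 1 = d a v"
proof -
  obtain p where p: "walk V E p" "hd p = a" "last p = v" "length p = Suc (d a v)"
    using dist_ex assms by blast
  have "d a v \<noteq> 0" using d_0 assms by blast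
  then have l: "1 < length p" using p by simp
  have "E (p!0) (p!1)" using p l unfolding walk_def by auto
  moreover have "p ! 0 = a" using p l by (cases p) auto
  moreover have "d (p!1) v + 1 = d a v" using shortest_pos[OF p l] by simp
  ultimately show ?thesis by metis
qed

end


context tr
begin

lemma two_paths_cycle:
  assumes wP: "walk V E (a # P)" and wQ: "walk V E (a # Q)" and dP: "distinct P" and dQ: "distinct Q"
    and aP: "a \<notin> set P" and aQ: "a \<notin> set Q" and ne: "P \<noteq> []" "Q \<noteq> []"
    and hd: "hd P \<noteq> hd Q" and la: "last P = last Q"
  shows False
proof -
  have "\<exists>z\<in>set P. z \<in> set Q" using ne la by (metis last_in_set)
  then obtain P1 z P2 where P: "P = P1 @ z # P2" "z \<in> set Q" "\<forall>y\<in>set P1. y \<notin> set Q"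
    by (rule split_list_first_propE)
  obtain Q1 Q2 where Q: "Q = Q1 @ z # Q2" using P(2) split_list by metis
  let ?c = "a # P1 @ rev (Q1 @ [z])"
  have sP: "successively E (a # P)" "set (a # P) \<subseteq> V" using walkD[OF wP] by auto
  have sQ: "successively E (a # Q)" "set (a # Q) \<subseteq> V" using walkD[OF wQ] by auto
  have eP: "a # P = (a # P1 @ [z]) @ P2" using P by simp
  have eQ: "a # Q = (a # Q1 @ [z]) @ Q2" using Q by simp
  have s1: "successively E (a # P1 @ [z])"
    using sP(1) unfolding eP successively_append_iff by blast
  have s2: "successively E (a # Q1 @ [z])"
    using sQ(1) unfolding eQ successively_append_iff by blast
  then have s2': "successively E (rev (a # Q1 @ [z]))" using succ_sym by blast
  have "rev (a # Q1 @ [z]) = z # rev Q1 @ [a]" by simp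
  have sc: "successively E (a # P1 @ z # rev Q1)"
  proof -
    have A0: "successively E ((a # P1) @ [z])" using s1 by simp
    then have A: "successively E (a # P1)" "E (last (a # P1)) z"
      unfolding successively_append_iff by auto
    have "rev (a # Q1 @ [z]) = (z # rev Q1) @ [a]" by simp
    then have "successively E ((z # rev Q1) @ [a])" using s2' by simp
    then have B: "successively E (z # rev Q1)"
      unfolding successively_append_iff by blast
    have "(a # P1 @ z # rev Q1) = (a # P1) @ (z # rev Q1)" by simp
    moreover have "successively E ((a # P1) @ (z # rev Q1))"
      unfolding successively_append_iff using A B by auto
    ultimately show ?thesis by simp
  qed
  have "?c = a # P1 @ z # rev Q1" by simp
  have cyc_last: "E (last (a # P1 @ z # rev Q1)) a"
  proof (cases Q1)
    case Nil
    then have "hd Q = z" using Q by simp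
    moreover have "E a (hd Q)" using sQ(1) ne(2) by (cases Q) auto
    ultimately show ?thesis using Nil by (auto intro: Esym)
  next
    case (Cons q Q1')
    then have "hd Q = q" using Q by simp
    moreover have "E a (hd Q)" using sQ(1) ne(2) by (cases Q) auto
    ultimately show ?thesis using Cons by (auto intro: Esym simp: last_rev)
  qed
  have dist: "distinct (a # P1 @ z # rev Q1)"
    using dP dQ aP aQ P Q by auto
  have len: "length (a # P1 @ z # rev Q1) \<ge> 3"
  proof (rule ccontr)
    assume "\<not> ?thesis"
    then have "P1 = []" "Q1 = []" by (auto simp: length_0_conv[symmetric] simp del: length_0_conv)
    then show False using hd P Q by simp
  qed
  have "set (a # P1 @ z # rev Q1) \<subseteq> V" using sP(2) sQ(2) P Q by auto
  then have "is_cycle V E (a # P1 @ z # rev Q1)"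
    using sc dist len cyc_last unfolding is_cycle_def walk_succ by auto
  then show False using nocyc by blast
qed

lemma path_unique:
  assumes "path_between V E x y p" "path_between V E x y q"
  shows "p = q"
  using assms
proof (induction p arbitrary: x q)
  case Nil
  then show ?case by (simp add: path_between_def walk_def)
next
  case (Cons a p')
  have wq: "walk V E q" "distinct q" "hd q = x" "last q = y" using Cons.prems(2)[unfolded path_between_def] by auto
  have wp: "walk V E (a # p')" "distinct (a # p')" "a = x" "last (a # p') = y"
    using Cons.prems(1)[unfolded path_between_def] by auto
  obtain q' where q: "q = a # q'" using wq wp walkD by (cases q) auto
  show ?case
  proof (cases "p' = []")
    case True
    then have "y = a" using wp by simp
    then have "q' = []" using wq q by (cases q' rule: rev_cases) auto
    then show ?thesis using q True by simp
  next
    case pne: False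
    show ?thesis
    proof (cases "q' = []")
      case True
      then have "y = a" using wq q by simp
      then have "p' = []" using wp by (cases p' rule: rev_cases) auto
      then show ?thesis using pne by simp
    next
      case qne: False
      show ?thesis
      proof (cases "hd p' = hd q'")
        case True
        have "path_between V E (hd p') y p'"
          using wp pne unfolding path_between_def walk_succ
          by (auto simp: successively_Cons)
        moreover have "path_between V E (hd p') y q'"
          using wq q qne True unfolding path_between_def walk_succ
          by (auto simp: successively_Cons)
        ultimately show ?thesis using Cons.IH q by auto
      next
        case False
        show ?thesis
          using two_paths_cycle[of a p' q'] wp wq q pne qne False by auto
      qed
    qed
  qed
qed

lemma shortest_path:
  assumes "u \<in> V" "v \<in> V"
  shows "\<exists>p. path_between V E u v p \<and> length p = Suc (d u v)"
  using dist_ex[OF assms] shortest_distinct unfolding path_between_def by blast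

lemma path_len:
  assumes "path_between V E u v p"
  shows "length p = Suc (d u v)"
proof -
  have "u \<in> V" "v \<in> V" using assms walkD unfolding path_between_def
    by (auto dest!: walkD intro: hd_in_set last_in_set)
  then obtain q where "path_between V E u v q" "length q = Suc (d u v)"
    using shortest_path by blast
  then show ?thesis using path_unique assms by blast
qed

lemma core:
  assumes ab: "E a b" and ac: "E a c" and bc: "b \<noteq> c" and v: "v \<in> V"
    and db: "d b v \<le> d a v" and dc: "d c v \<le> d a v"
  shows False
proof -
  have aV: "a \<in> V" "b \<in> V" "c \<in> V" using EV ab ac by auto
  have notin: "a \<notin> set P" if "walk V E P" "hd P = b" "last P = v" "length P = Suc (d b v)" "E a b"
    "d b v \<le> d a v" for P b
  proof
    assume "a \<in> set P"
    then obtain i where i: "i < length P" "P ! i = a" by (auto simp: in_set_conv_nth)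
    have "d (P!i) v + i = d b v" using shortest_pos[OF that(1-4) i(1)] by simp
    moreover have "i \<noteq> 0" using i that(2,5) Ene
      by (metis hd_conv_nth length_greater_0_conv list.size(3) not_less0)
    ultimately show False using i(2) that(6) by simp
  qed
  obtain P where P: "walk V E P" "hd P = b" "last P = v" "length P = Suc (d b v)"
    using dist_ex aV v by blast
  obtain Q where Q: "walk V E Q" "hd Q = c" "last Q = v" "length Q = Suc (d c v)"
    using dist_ex aV v by blast
  have nP: "a \<notin> set P" using notin[OF P ab db] .
  have nQ: "a \<notin> set Q" using notin[OF Q ac dc] .
  have neP: "P \<noteq> []" "Q \<noteq> []" using walkD P(1) Q(1) by auto
  have "walk V E (a # P)" using P(1,2) ab aV neP unfolding walk_succ
    by (cases P) (auto simp: successively_Cons)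
  moreover have "walk V E (a # Q)" using Q(1,2) ac aV neP unfolding walk_succ
    by (cases Q) (auto simp: successively_Cons)
  moreover have "distinct P" using shortest_distinct P by blast
  moreover have "distinct Q" using shortest_distinct Q by blast
  ultimately show False using two_paths_cycle[of a P Q] nP nQ neP P Q bc by auto
qed

lemma adj_diff:
  assumes "E a w" "v \<in> V"
  shows "d w v = d a v + 1 \<or> d a v = d w v + 1"
proof -
  have V: "a \<in> V" "w \<in> V" using EV assms by auto
  have t1: "d w v \<le> d w a + d a v" "d a v \<le> d a w + d w v" using d_tri V assms by auto
  have e: "d w a = 1" "d a w = 1" using d_edge assms Esym by auto
  show ?thesis
  proof (cases "a = v")
    case True
    then show ?thesis using d_edge assms d_refl V Esym by auto
  next
    case False
    then obtain n where n: "E a n" "d n v + 1 = d a v" using next_hop V assms by blast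
    show ?thesis
    proof (cases "w = n")
      case True then show ?thesis using n by simp
    next
      case False
      have "\<not> d w v \<le> d a v"
        using core[OF assms(1) n(1) False assms(2)] n by auto
      then show ?thesis using t1 e by auto
    qed
  qed
qed

lemma hop_unique:
  assumes "E a b" "E a c" "v \<in> V" "d b v < d a v" "d c v < d a v"
  shows "b = c"
  using core[OF assms(1,2) _ assms(3)] assms(4,5) by fastforce

end


lemma card_ge2_obtain:
  assumes "finite A" "card A \<ge> 2"
  shows "\<exists>a b. a \<in> A \<and> b \<in> A \<and> a \<noteq> b"
proof -
  have "A \<noteq> {}" using assms by auto
  then obtain a where a: "a \<in> A" by blast
  have "card (A - {a}) \<ge> 1" using assms a by (simp add: card_Diff_singleton)
  then have "A - {a} \<noteq> {}" by (metis card.empty not_one_le_zero)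
  then obtain b where "b \<in> A - {a}" by blast
  then show ?thesis using a by blast
qed

context tr
begin

abbreviation btw where "btw x v y \<equiv> d x v + d v y = d x y"

lemma btw_trans:
  assumes V: "x \<in> V" "v \<in> V" "u \<in> V" "y \<in> V" and "btw x v u" "btw x u y"
  shows "btw x v y \<and> btw v u y"
proof -
  have "d x y \<le> d x v + d v y" "d v y \<le> d v u + d u y" using d_tri V by auto
  moreover have "d x u \<le> d x v + d v u" using d_tri V by auto
  ultimately show ?thesis using assms by linarith
qed

lemma cut:
  assumes ab: "E a b" and V: "v \<in> V" "z \<in> V"
    and hv: "d v b = d v a + 1" and hz: "d z a = d z b + 1"
  shows "d v z = d v a + 1 + d b z"
proof -
  have aV: "a \<in> V" "b \<in> V" using EV ab by auto
  obtain P where P: "walk V E P" "hd P = v" "last P = a" "length P = Suc (d v a)"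
    using dist_ex aV V by blast
  obtain Q where Q: "walk V E Q" "hd Q = b" "last Q = z" "length Q = Suc (d b z)"
    using dist_ex aV V by blast
  have neP: "P \<noteq> []" "Q \<noteq> []" using walkD P(1) Q(1) by auto
  have dP: "distinct P" "distinct Q" using shortest_distinct P Q by blast+
  have disj: "set P \<inter> set Q = {}"
  proof (rule ccontr)
    assume "set P \<inter> set Q \<noteq> {}"
    then obtain w where w: "w \<in> set P" "w \<in> set Q" by blast
    obtain i where i: "i < length P" "P ! i = w" using w by (auto simp: in_set_conv_nth)
    obtain j where j: "j < length Q" "Q ! j = w" using w by (auto simp: in_set_conv_nth)
    have pi: "d v w = i" "d w a + i = d v a" using shortest_pos[OF P i(1)] i by auto
    have pj: "d b w = j" "d w z + j = d b z" using shortest_pos[OF Q j(1)] j by auto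
    have wV: "w \<in> V" using walkD P(1) w by auto
    have "d v b \<le> d v w + d w b" "d w b \<le> d w a + d a b" "d z a \<le> d z w + d w a"
      using d_tri V aV wV by auto
    moreover have "d a b = 1" using d_edge ab by simp
    moreover have "d w b = d b w" "d z w = d w z" "d z b = d b z" using d_sym aV wV V by auto
    ultimately show False using pi pj hv hz by linarith
  qed
  have "successively E (P @ Q)" using walkD[OF P(1)] walkD[OF Q(1)] P(3) Q(2) ab neP
    by (auto simp: successively_append_iff)
  moreover have "set (P @ Q) \<subseteq> V" using walkD[OF P(1)] walkD[OF Q(1)] by auto
  ultimately have "path_between V E v z (P @ Q)"
    unfolding path_between_def walk_succ using neP P Q dP disj by auto
  then have "length (P @ Q) = Suc (d v z)" using path_len by blast
  then show ?thesis using P Q by simp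
qed

lemma nbr_fin: "finite {u\<in>V. E v u}" using finV by simp

lemma deg_ge2: assumes "E v a" "E v b" "a \<noteq> b" shows "degree V E v \<ge> 2"
proof -
  have "{a, b} \<subseteq> {u\<in>V. E v u}" using assms EV by auto
  then have "card {a,b} \<le> degree V E v" unfolding degree_def using card_mono nbr_fin by blast
  then show ?thesis using assms by simp
qed

lemma deg_ge3: assumes "E v a" "E v b" "E v c" "a \<noteq> b" "a \<noteq> c" "b \<noteq> c"
  shows "degree V E v \<ge> 3"
proof -
  have "{a, b, c} \<subseteq> {u\<in>V. E v u}" using assms EV by auto
  then have "card {a,b,c} \<le> degree V E v" unfolding degree_def using card_mono nbr_fin by blast
  then show ?thesis using assms by simp
qed

lemma leaf_unique: "leaf V E x \<Longrightarrow> E x a \<Longrightarrow> E x b \<Longrightarrow> a = b"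
  using deg_ge2 unfolding leaf_def by fastforce

lemma leaf_nbr: assumes "leaf V E x" shows "\<exists>a. E x a"
proof -
  have "card {u\<in>V. E x u} = 1" using assms unfolding leaf_def degree_def by simp
  then have "{u\<in>V. E x u} \<noteq> {}" by (metis card.empty zero_neq_one)
  then show ?thesis by blast
qed

lemma leafV: "leaf V E x \<Longrightarrow> x \<in> V" unfolding leaf_def by simp
lemma majorV: "major V E x \<Longrightarrow> x \<in> V" unfolding major_def by simp

lemma leaf_not_major: "leaf V E x \<Longrightarrow> \<not> major V E x"
  unfolding leaf_def major_def by simp

lemma major_two:
  assumes "major V E v"
  shows "\<exists>a b. E v a \<and> E v b \<and> a \<noteq> b \<and> a \<noteq> n \<and> b \<noteq> n"
proof -
  let ?N = "{u\<in>V. E v u} - {n}"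
  have "card {u\<in>V. E v u} \<ge> 3" using assms unfolding major_def degree_def by simp
  moreover have "card ?N = (if n \<in> {u\<in>V. E v u} then card {u\<in>V. E v u} - 1 else card {u\<in>V. E v u})"
    by (rule card_Diff_singleton_if)
  ultimately have "card ?N \<ge> 2" by (cases "n \<in> {u\<in>V. E v u}") auto
  then obtain a b where "a \<in> ?N" "b \<in> ?N" "a \<noteq> b" using card_ge2_obtain[of ?N] nbr_fin by auto
  then show ?thesis by blast
qed

lemma deg2_nbrs:
  assumes "\<not> major V E v" "E v a" "E v b" "a \<noteq> b" "E v m"
  shows "m = a \<or> m = b"
  using deg_ge3[of v a b m] assms EV unfolding major_def by fastforce

lemma has_nbr: assumes "v \<in> V" shows "\<exists>a. E v a"
proof -
  have "\<exists>w\<in>V. w \<noteq> v"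
  proof (rule ccontr)
    assume "\<not> ?thesis"
    then have "V \<subseteq> {v}" by auto
    then have "card V \<le> 1" using card_mono[of "{v}" V] by simp
    then show False using cardV by simp
  qed
  then obtain w where "w \<in> V" "w \<noteq> v" by blast
  then show ?thesis using next_hop assms by blast
qed

lemma internal_two:
  assumes V: "x \<in> V" "v \<in> V" "u \<in> V" and b: "btw x v u" and "v \<noteq> x" "v \<noteq> u"
  shows "\<exists>g h. E v g \<and> E v h \<and> g \<noteq> h \<and> d g x + 1 = d v x \<and> d h u + 1 = d v u"
proof -
  obtain g where g: "E v g" "d g x + 1 = d v x" using next_hop assms by blast
  obtain h where h: "E v h" "d h u + 1 = d v u" using next_hop assms by blast
  have "g \<noteq> h"
  proof
    assume "g = h"
    have gV: "g \<in> V" using EV g by auto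
    have "d x u \<le> d x g + d g u" using d_tri V gV by auto
    moreover have "d x g = d g x" "d x v = d v x" using d_sym V gV by auto
    moreover have "d g u + 1 = d v u" using h \<open>g = h\<close> by simp
    ultimately show False using b g by linarith
  qed
  then show ?thesis using g h by blast
qed

lemma follow:
  assumes lf: "leaf V E l" and uV: "u \<in> V"
    and nm: "\<And>v. v \<in> V \<Longrightarrow> btw l v u \<Longrightarrow> v \<noteq> u \<Longrightarrow> \<not> major V E v"
    and wV: "w \<in> V" and wn: "\<not> (btw l w u \<and> w \<noteq> u)"
  shows "v \<in> V \<Longrightarrow> btw l v u \<Longrightarrow> btw l v w"
proof (induction "d l v" arbitrary: v)
  case 0
  have lV: "l \<in> V" using lf leafV by blast
  then have "v = l" using d_0 0 by auto
  then show ?case using d_refl lV by simp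
next
  case (Suc k)
  have lV: "l \<in> V" using lf leafV by blast
  have vl: "v \<noteq> l" using Suc.hyps d_refl lV by auto
  obtain n where n: "E v n" "d n l + 1 = d v l" using next_hop Suc.prems lV vl by blast
  have nV: "n \<in> V" using EV n by auto
  have dsym: "d l n = d n l" "d l v = d v l" "d n u = d u n" using d_sym lV nV Suc.prems uV by auto
  have "d l u \<le> d l n + d n u" "d n u \<le> d n v + d v u" using d_tri lV nV uV Suc.prems by auto
  moreover have "d n v = 1" using d_edge n Esym by auto
  ultimately have bn: "btw l n u" using Suc.prems(2) n dsym by linarith
  have dln: "k = d l n" using Suc.hyps n dsym by simp
  have IH: "btw l n w" using Suc.hyps(1)[OF dln nV bn] .
  have nu: "n \<noteq> u" using Suc.prems(2) dln Suc.hyps by auto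
  have nw: "n \<noteq> w" using wn bn nu by auto
  obtain h where h: "E n h" "d h w + 1 = d n w" using next_hop nV wV nw by blast
  have hv: "h = v"
  proof (cases "n = l")
    case True
    then show ?thesis using leaf_unique[OF lf] h n Esym by blast
  next
    case False
    obtain g where g: "E n g" "d g l + 1 = d n l" using next_hop nV lV False by blast
    have gv: "g \<noteq> v" using g n by auto
    have nmaj: "\<not> major V E n" using nm nV bn nu by blast
    have "h = v \<or> h = g" using deg2_nbrs[OF nmaj _ g(1) _ h(1)] n Esym gv by blast
    moreover have "h \<noteq> g"
    proof
      assume "h = g"
      have gV: "g \<in> V" using EV g by auto
      have "d l w \<le> d l g + d g w" using d_tri lV gV wV by auto
      moreover have "d l g = d g l" using d_sym lV gV by auto
      moreover have "d g w + 1 = d n w" using h \<open>h = g\<close> by simp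
      ultimately show False using IH g dsym by linarith
    qed
    ultimately show ?thesis by blast
  qed
  have "d v w + 1 = d n w" using h hv by simp
  then show ?case using IH n dsym Suc.hyps dln by linarith
qed

lemma term_intro:
  assumes lf: "leaf V E l" and mu: "major V E u"
    and nm: "\<And>v. v \<in> V \<Longrightarrow> btw l v u \<Longrightarrow> v \<noteq> u \<Longrightarrow> \<not> major V E v"
  shows "terminal V E u l"
proof -
  have uV: "u \<in> V" using mu majorV by blast
  have lV: "l \<in> V" using lf leafV by blast
  have "d l u < d l w" if "major V E w" "w \<noteq> u" for w
  proof -
    have wV: "w \<in> V" using that majorV by blast
    have "\<not> (btw l w u \<and> w \<noteq> u)" using nm wV that by blast
    then have "btw l u w" using follow[OF lf uV nm wV] uV d_refl by simp
    moreover have "d u w \<noteq> 0" using d_0 uV wV that by blast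
    ultimately show ?thesis by linarith
  qed
  then show ?thesis unfolding terminal_def using lf mu by blast
qed

lemma term_leaf: "terminal V E u x \<Longrightarrow> leaf V E x" unfolding terminal_def by blast
lemma term_major: "terminal V E u x \<Longrightarrow> major V E u" unfolding terminal_def by blast

lemma term_nm:
  assumes t: "terminal V E u x" and "v \<in> V" "btw x v u" "v \<noteq> u"
  shows "\<not> major V E v"
proof
  assume m: "major V E v"
  have V: "x \<in> V" "u \<in> V" using t term_leaf term_major leafV majorV by blast+
  have "d x u < d x v" using t m assms(4) unfolding terminal_def by blast
  then show False using assms(3) by linarith
qed

lemma term_follow:
  assumes t: "terminal V E u x" and "w \<in> V" "\<not> (btw x w u \<and> w \<noteq> u)"
    and "v \<in> V" "btw x v u"
  shows "btw x v w"
proof -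
  have "u \<in> V" using t term_major majorV by blast
  then show ?thesis using follow[OF term_leaf[OF t] _ term_nm[OF t] assms(2,3)] assms(4,5) by blast
qed

lemma term_unique: assumes "terminal V E u x" "terminal V E u' x" shows "u = u'"
proof (rule ccontr)
  assume "u \<noteq> u'"
  then have "d x u < d x u'" "d x u' < d x u" using assms unfolding terminal_def by blast+
  then show False by simp
qed

lemma leaf_not_internal:
  assumes t: "terminal V E u x" and y: "leaf V E y" "y \<noteq> x"
  shows "\<not> (btw x y u \<and> y \<noteq> u)"
proof
  assume a: "btw x y u \<and> y \<noteq> u"
  have V: "x \<in> V" "u \<in> V" "y \<in> V" using t y term_leaf term_major leafV majorV by blast+
  obtain g h where "E y g" "E y h" "g \<noteq> h" using internal_two[OF V(1,3,2)] a y by blast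
  then show False using leaf_unique y by blast
qed

lemma term_btw:
  assumes t: "terminal V E u x" and y: "leaf V E y" "y \<noteq> x"
  shows "btw x u y"
proof -
  have V: "x \<in> V" "u \<in> V" "y \<in> V" using t y term_leaf term_major leafV majorV by blast+
  show ?thesis using term_follow[OF t V(3) leaf_not_internal[OF t y] V(2)] d_refl V by simp
qed

lemma legs_disjoint:
  assumes tx: "terminal V E u x" and ty: "terminal V E u' y" and xy: "x \<noteq> y"
    and vV: "v \<in> V" and v1: "btw x v u" "v \<noteq> u" and v2: "btw y v u'" "v \<noteq> u'"
  shows False
proof -
  have V: "x \<in> V" "u \<in> V" "y \<in> V" "u' \<in> V"
    using tx ty term_leaf term_major leafV majorV by blast+
  have b1: "btw x u y" using term_btw[OF tx term_leaf[OF ty]] xy by blast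
  have "d y u' \<le> d y u"
  proof (cases "u = u'")
    case False
    then show ?thesis using ty term_major[OF tx] unfolding terminal_def by fastforce
  qed simp
  moreover have "d x y \<le> d x v + d v y" using d_tri V vV by auto
  moreover have "d v y = d y v" "d u y = d y u" using d_sym V vV by auto
  moreover have "d v u \<noteq> 0" "d v u' \<noteq> 0" using d_0 V vV v1 v2 by auto
  ultimately show False using b1 v1 v2 by linarith
qed

end


lemma fin_argmax:
  fixes f :: "'b \<Rightarrow> nat"
  assumes "finite S" "S \<noteq> {}"
  shows "\<exists>x\<in>S. \<forall>y\<in>S. f y \<le> f x"
  using assms
proof (induction S rule: finite_ne_induct)
  case (singleton x) then show ?case by simp
next
  case (insert x F)
  then obtain m where m: "m \<in> F" "\<forall>y\<in>F. f y \<le> f m" by blast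
  show ?case
  proof (cases "f x \<le> f m")
    case True then show ?thesis using m by auto
  next
    case False then show ?thesis using m by (intro bexI[of _ x]) force+
  qed
qed

lemma fin_argmin:
  fixes f :: "'b \<Rightarrow> nat"
  assumes "finite S" "S \<noteq> {}"
  shows "\<exists>x\<in>S. \<forall>y\<in>S. f x \<le> f y"
  using assms
proof (induction S rule: finite_ne_induct)
  case (singleton x) then show ?case by simp
next
  case (insert x F)
  then obtain m where m: "m \<in> F" "\<forall>y\<in>F. f m \<le> f y" by blast
  show ?case
  proof (cases "f x \<le> f m")
    case True then show ?thesis using m by (intro bexI[of _ x]) force+
  next
    case False then show ?thesis using m by (intro bexI[of _ m]) auto
  qed
qed

lemma crossing:
  assumes "P (hd p)" "\<not> P (last p)" "p \<noteq> []"
  shows "\<exists>i. Suc i < length p \<and> P (p ! i) \<and> \<not> P (p ! Suc i)"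
  using assms
proof (induction p)
  case Nil then show ?case by simp
next
  case (Cons a p)
  show ?case
  proof (cases "p = []")
    case True then show ?thesis using Cons by simp
  next
    case False
    show ?thesis
    proof (cases "P (hd p)")
      case True
      then obtain i where "Suc i < length p" "P (p ! i)" "\<not> P (p ! Suc i)"
        using Cons False by auto
      then show ?thesis by (intro exI[of _ "Suc i"]) auto
    next
      case F2: False
      then show ?thesis using Cons False by (intro exI[of _ 0]) (auto simp: hd_conv_nth)
    qed
  qed
qed

context tr
begin

lemma geo_in_walk:
  assumes p: "walk V E p" "hd p = x" "last p = y" and v: "v \<in> V" "btw x v y"
  shows "v \<in> set p"
proof -
  have ne: "p \<noteq> []" using walkD p by auto
  have V: "x \<in> V" "y \<in> V" using walkD[OF p(1)] p ne by auto
  show ?thesis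
  proof (cases "v = y")
    case True then show ?thesis using p ne by auto
  next
    case False
    obtain b where b: "E v b" "d b y + 1 = d v y" using next_hop v V False by blast
    have bV: "b \<in> V" using EV b by auto
    let ?P = "\<lambda>w. d w b = d w v + 1"
    have "d x b \<le> d x v + d v b" "d x y \<le> d x b + d b y" using d_tri V v bV by auto
    moreover have "d v b = 1" using d_edge b by simp
    ultimately have Px: "?P x" using v b by linarith
    have "d y b = d b y" "d y v = d v y" using d_sym V v bV by auto
    then have nPy: "\<not> ?P y" using b by linarith
    obtain i where i: "Suc i < length p" "?P (p ! i)" "\<not> ?P (p ! Suc i)"
      using crossing[of ?P p] Px nPy p ne by auto
    have ac: "E (p ! i) (p ! Suc i)" using p(1) i(1) unfolding walk_def by blast
    have acV: "p ! i \<in> V" "p ! Suc i \<in> V" using EV ac by auto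
    have "d (p ! Suc i) v = d (p ! Suc i) b + 1"
      using adj_diff[OF b(1) acV(2)] i(3) d_sym acV v bV by auto
    then have "d (p!i) (p ! Suc i) = d (p!i) v + 1 + d b (p ! Suc i)"
      using cut[OF b(1) acV(1) acV(2)] i(2) by blast
    moreover have "d (p!i) (p ! Suc i) = 1" using d_edge ac by simp
    ultimately have "d (p!i) v = 0" by simp
    then have "p ! i = v" using d_0 acV v by blast
    then show ?thesis using i(1) by (metis Suc_lessD nth_mem)
  qed
qed

lemma path_set:
  assumes p: "path_between V E x y p"
  shows "set p = {v\<in>V. btw x v y}"
proof
  have pl: "length p = Suc (d x y)" using path_len p by blast
  have w: "walk V E p" "hd p = x" "last p = y" using p[unfolded path_between_def] by auto
  show "set p \<subseteq> {v\<in>V. btw x v y}"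
  proof
    fix v assume "v \<in> set p"
    then obtain i where i: "i < length p" "p ! i = v" by (auto simp: in_set_conv_nth)
    have "d x v = i \<and> d v y + i = d x y" using shortest_pos[OF w pl i(1)] i(2) by simp
    moreover have "v \<in> V" using walkD[OF w(1)] \<open>v \<in> set p\<close> by blast
    ultimately show "v \<in> {v\<in>V. btw x v y}" by simp
  qed
  show "{v\<in>V. btw x v y} \<subseteq> set p"
  proof
    fix v assume "v \<in> {v\<in>V. btw x v y}"
    then show "v \<in> set p" using geo_in_walk[OF w] by simp
  qed
qed

lemma geo_point:
  assumes "x \<in> V" "y \<in> V" "i \<le> d x y"
  shows "\<exists>v\<in>V. d x v = i \<and> d v y + i = d x y"
proof -
  obtain p where p: "walk V E p" "hd p = x" "last p = y" "length p = Suc (d x y)"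
    using dist_ex assms by blast
  have il: "i < length p" using p assms by simp
  then have "d x (p!i) = i \<and> d (p!i) y + i = d x y" using shortest_pos[OF p] by blast
  moreover have "p ! i \<in> V" using walkD[OF p(1)] il by auto
  ultimately show ?thesis by blast
qed

lemma leaf_intro:
  assumes "x \<in> V" "E x a" "\<And>b. E x b \<Longrightarrow> b = a"
  shows "leaf V E x"
proof -
  have "{u\<in>V. E x u} = {a}" using assms(2,3) EV[OF assms(2)] by blast
  then show ?thesis unfolding leaf_def degree_def using assms(1) by simp
qed

lemma nomaj_path:
  assumes nm: "\<And>v. \<not> major V E v"
  shows "is_path_graph V E"
proof -
  have ne: "V \<times> V \<noteq> {}" using cardV by auto
  have fin: "finite (V \<times> V)" using finV by simp
  obtain xy where xy: "xy \<in> V \<times> V" "\<forall>z\<in>V \<times> V. d (fst z) (snd z) \<le> d (fst xy) (snd xy)"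
    using fin_argmax[OF fin ne, of "\<lambda>z. d (fst z) (snd z)"] by blast
  obtain x y where xyd: "xy = (x, y)" by (cases xy)
  have V: "x \<in> V" "y \<in> V" using xy(1) xyd by auto
  have mx: "d a b \<le> d x y" if "a \<in> V" "b \<in> V" for a b
  proof -
    have "(a, b) \<in> V \<times> V" using that by simp
    then have "d (fst (a,b)) (snd (a,b)) \<le> d (fst xy) (snd xy)" using xy(2) by blast
    then show ?thesis using xyd by simp
  qed
  have leafy: "leaf V E l" if lV: "l \<in> V" "o' \<in> V" "d l o' = d x y" "l \<noteq> o'" for l o'
  proof -
    obtain n where n: "E l n" "d n o' + 1 = d l o'" using next_hop lV by blast
    have "b = n" if "E l b" for b
    proof -
      have bV: "b \<in> V" using EV that by auto
      have "d b o' \<le> d x y" using mx bV lV(2) by blast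
      then have "d b o' < d l o'" using adj_diff[OF that lV(2)] lV(3) by linarith
      then show ?thesis using hop_unique[OF that n(1) lV(2)] n by linarith
    qed
    then show ?thesis using leaf_intro lV(1) n(1) by blast
  qed
  have xy_ne: "x \<noteq> y"
  proof
    assume "x = y"
    then have dz: "d x y = 0" using d_refl V by simp
    have "a = b" if "a \<in> V" "b \<in> V" for a b
    proof -
      have "d a b \<le> d x y" using mx that by blast
      then have "d a b = 0" using dz by simp
      then show ?thesis using d_0 that by blast
    qed
    then have "card V \<le> 1" using card_le_Suc0_iff_eq[OF finV] by auto
    then show False using cardV by simp
  qed
  have lx: "leaf V E x" using leafy[of x y] V xy_ne by blast
  have "d y x = d x y" using d_sym V by simp
  then have ly: "leaf V E y" using leafy[of y x] V xy_ne by blast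
  have nm': "\<And>v. v \<in> V \<Longrightarrow> btw x v y \<Longrightarrow> v \<noteq> y \<Longrightarrow> \<not> major V E v" using nm by blast
  have allgeo: "btw x w y" if wV: "w \<in> V" for w
  proof (rule ccontr)
    assume nb: "\<not> btw x w y"
    have "d y y = 0" using d_refl V by simp
    then have "btw x y y" by simp
    then have "btw x y w" using follow[OF lx V(2) nm' wV] nb V(2) by blast
    moreover have "d x w \<le> d x y" using mx V wV by blast
    ultimately have "d y w = 0" by linarith
    then have "w = y" using d_0 V wV by blast
    then show False using nb \<open>d y y = 0\<close> by simp
  qed
  obtain p where p: "walk V E p" "hd p = x" "last p = y" "length p = Suc (d x y)"
    using dist_ex V by blast
  have dp: "distinct p" using shortest_distinct p by blast
  have sp1: "set p \<subseteq> V" using walkD[OF p(1)] by blast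
  have sp2: "V \<subseteq> set p"
  proof
    fix w assume "w \<in> V"
    then show "w \<in> set p" using geo_in_walk[OF p(1-3)] allgeo by blast
  qed
  have sp: "set p = V" using sp1 sp2 by blast
  have pos: "d x (p ! i) = i" if "i < length p" for i using shortest_pos[OF p that] by blast
  have "E a b \<longleftrightarrow> (\<exists>i. Suc i < length p \<and> ((p ! i = a \<and> p ! Suc i = b) \<or> (p ! i = b \<and> p ! Suc i = a)))"
    for a b
  proof
    assume ab: "E a b"
    have abV: "a \<in> V" "b \<in> V" using EV ab by auto
    obtain i where i: "i < length p" "p ! i = a" using abV(1) sp by (metis in_set_conv_nth)
    obtain j where j: "j < length p" "p ! j = b" using abV(2) sp by (metis in_set_conv_nth)
    have "d b x = d a x + 1 \<or> d a x = d b x + 1" using adj_diff ab V by blast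
    moreover have "d a x = d x a" "d b x = d x b" using d_sym V abV by auto
    moreover have "d x a = i" "d x b = j" using pos i j by auto
    ultimately have "j = Suc i \<or> i = Suc j" by linarith
    then show "\<exists>i. Suc i < length p \<and> ((p ! i = a \<and> p ! Suc i = b) \<or> (p ! i = b \<and> p ! Suc i = a))"
      using i j by auto
  next
    assume "\<exists>i. Suc i < length p \<and> ((p ! i = a \<and> p ! Suc i = b) \<or> (p ! i = b \<and> p ! Suc i = a))"
    then obtain i where i: "Suc i < length p" "(p ! i = a \<and> p ! Suc i = b) \<or> (p ! i = b \<and> p ! Suc i = a)"
      by blast
    have "E (p ! i) (p ! Suc i)" using p(1) i(1) unfolding walk_def by blast
    then show "E a b" using i(2) Esym by blast
  qed
  then show ?thesis unfolding is_path_graph_def using dp sp by blast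
qed

lemma ex_major: "\<not> is_path_graph V E \<Longrightarrow> \<exists>u. major V E u"
  using nomaj_path by blast

lemma ex_terminal:
  assumes lf: "leaf V E x" and ex: "\<exists>u. major V E u"
  shows "\<exists>u. terminal V E u x"
proof -
  let ?M = "{u. major V E u}"
  have fM: "finite ?M" using finV majorV by (metis mem_Collect_eq rev_finite_subset subsetI)
  obtain u where u: "u \<in> ?M" "\<forall>w\<in>?M. d x u \<le> d x w"
    using fin_argmin[OF fM] ex by blast
  have xV: "x \<in> V" using lf leafV by blast
  have uV: "u \<in> V" using u majorV by blast
  have "\<not> major V E v" if "v \<in> V" "btw x v u" "v \<noteq> u" for v
  proof
    assume "major V E v"
    then have "d x u \<le> d x v" using u by blast
    moreover have "d v u \<noteq> 0" using d_0 that uV by blast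
    ultimately show False using that by linarith
  qed
  then show ?thesis using term_intro[OF lf] u by blast
qed

lemma ss_major:
  assumes ss: "strong_support V E s" and np: "\<not> is_path_graph V E"
  shows "major V E s"
proof (rule ccontr)
  assume nms: "\<not> major V E s"
  have sV: "s \<in> V" using ss unfolding strong_support_def by blast
  have sub: "{x. leaf V E x \<and> E s x} \<subseteq> V" using leafV by blast
  have fin: "finite {x. leaf V E x \<and> E s x}" using finite_subset[OF sub finV] .
  have c2: "card {x. leaf V E x \<and> E s x} \<ge> 2" using ss unfolding strong_support_def by blast
  obtain l1 l2 where l0: "l1 \<in> {x. leaf V E x \<and> E s x}" "l2 \<in> {x. leaf V E x \<and> E s x}" "l1 \<noteq> l2"
    using card_ge2_obtain[OF fin c2] by blast
  have l: "leaf V E l1" "E s l1" "leaf V E l2" "E s l2" "l1 \<noteq> l2" using l0 by auto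
  have Vsub: "V \<subseteq> {s, l1, l2}"
  proof
    fix v assume vV: "v \<in> V"
    show "v \<in> {s, l1, l2}"
    proof (rule ccontr)
      assume nv: "v \<notin> {s, l1, l2}"
      then have vs: "s \<noteq> v" by blast
      obtain n where n: "E s n" "d n v + 1 = d s v" using next_hop[OF sV vV vs] by blast
      have nl: "n = l1 \<or> n = l2" using deg2_nbrs[OF nms l(2) l(4) l(5) n(1)] .
      then have ln: "leaf V E n" using l by blast
      have nV: "n \<in> V" using EV n by auto
      have nv': "n \<noteq> v" using nl nv by blast
      obtain h where h: "E n h" "d h v + 1 = d n v" using next_hop[OF nV vV nv'] by blast
      have "h = s" using leaf_unique[OF ln h(1)] n(1) Esym by blast
      then show False using h n by simp
    qed
  qed
  have "\<not> major V E v" for v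
  proof
    assume m: "major V E v"
    have "{u\<in>V. E v u} \<subseteq> {s, l1, l2} - {v}" using Vsub Eirr by blast
    then have "degree V E v \<le> card ({s, l1, l2} - {v})" unfolding degree_def
      by (intro card_mono) auto
    moreover have "card ({s, l1, l2} - {v}) \<le> 2"
    proof -
      have "v \<in> {s, l1, l2}" using m majorV Vsub by blast
      moreover have "card {s, l1, l2} \<le> 3" using card_insert_le_m1
        by (metis One_nat_def card.empty card_insert_if finite.emptyI finite_insert
            le_SucI numeral_3_eq_3 le_refl insert_absorb)
      ultimately show ?thesis by (simp add: card_Diff_singleton)
    qed
    ultimately show False using m unfolding major_def by simp
  qed
  then show False using nomaj_path np by blast
qed

end


context tr
begin

definition leg where "leg x u = {v\<in>V. btw x v u \<and> v \<noteq> u}"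

lemma leg_iff: "v \<in> leg x u \<longleftrightarrow> v \<in> V \<and> btw x v u \<and> v \<noteq> u"
  unfolding leg_def by simp

lemma leg_self: assumes "terminal V E u x" shows "x \<in> leg x u"
proof -
  have "x \<in> V" "u \<in> V" using assms term_leaf term_major leafV majorV by blast+
  moreover have "x \<noteq> u" using assms term_leaf term_major leaf_not_major by blast
  ultimately show ?thesis unfolding leg_def using d_refl by simp
qed

lemma lb_pair:
  assumes res: "resolving V E W" and tx: "terminal V E u x" and ty: "terminal V E u y" and xy: "x \<noteq> y"
  shows "leg x u \<inter> W \<noteq> {} \<or> leg y u \<inter> W \<noteq> {}"
proof (rule ccontr)
  assume "\<not> ?thesis"
  then have ex: "leg x u \<inter> W = {}" and ey: "leg y u \<inter> W = {}" by auto
  have V: "x \<in> V" "y \<in> V" "u \<in> V" using tx ty term_leaf term_major leafV majorV by blast+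
  have ux: "u \<noteq> x" "u \<noteq> y" using tx ty term_leaf term_major leaf_not_major by blast+
  have WV: "W \<subseteq> V" using res[unfolded resolving_def] by blast
  have nb: "\<exists>a. E u a \<and> a \<in> leg z u \<and> (\<forall>w\<in>W. d a w = d u w + 1)"
    if tz: "terminal V E u z" and ez: "leg z u \<inter> W = {}" for z
  proof -
    have zV: "z \<in> V" using tz term_leaf leafV by blast
    have uz: "u \<noteq> z" using tz term_leaf term_major leaf_not_major by blast
    obtain a where a: "E u a" "d a z + 1 = d u z" using next_hop[OF V(3) zV uz] by blast
    have aV: "a \<in> V" using EV a by auto
    have "d z a = d a z" "d z u = d u z" using d_sym aV zV V by auto
    moreover have au1: "d a u = 1" using d_edge a Esym by auto
    ultimately have ba: "btw z a u" using a by linarith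
    have au: "a \<noteq> u" using a Ene by auto
    have aleg: "a \<in> leg z u" using ba au aV leg_iff by blast
    have "d a w = d u w + 1" if wW: "w \<in> W" for w
    proof -
      have wV: "w \<in> V" using WV wW by blast
      have "w \<notin> leg z u" using ez wW by blast
      then have nw: "\<not> (btw z w u \<and> w \<noteq> u)" using wV leg_iff by blast
      have "btw z a w" using term_follow[OF tz wV nw aV ba] .
      moreover have "btw z u w" using term_follow[OF tz wV nw V(3)] d_refl V by simp
      ultimately show ?thesis using ba au1 by linarith
    qed
    then show ?thesis using a aleg by blast
  qed
  obtain a where a: "E u a" "a \<in> leg x u" "\<forall>w\<in>W. d a w = d u w + 1" using nb[OF tx ex] by blast
  obtain b where b: "E u b" "b \<in> leg y u" "\<forall>w\<in>W. d b w = d u w + 1" using nb[OF ty ey] by blast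
  have ab: "a \<noteq> b"
  proof
    assume "a = b"
    then have "a \<in> V" "btw x a u" "a \<noteq> u" "btw y a u" "a \<noteq> u" using a(2) b(2) leg_iff by auto
    then show False using legs_disjoint[OF tx ty xy, of a] by blast
  qed
  have abV: "a \<in> V" "b \<in> V" using EV a b by auto
  obtain w where w: "w \<in> W" "d w a \<noteq> d w b" using res[unfolded resolving_def] abV ab by blast
  have "w \<in> V" using WV w by blast
  then have "d w a = d a w" "d w b = d b w" using d_sym abV by auto
  then show False using w a b by simp
qed

abbreviation Maj where "Maj \<equiv> {u. major V E u}"
abbreviation Terms where "Terms u \<equiv> {x. terminal V E u x}"
definition Q where "Q = (\<Sum>u\<in>Maj. ter V E u - 1)"

lemma finMaj: "finite Maj"
proof -
  have "Maj \<subseteq> V" using majorV by blast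
  then show ?thesis using finite_subset finV by blast
qed

lemma finTerms: "finite (Terms u)"
proof -
  have "Terms u \<subseteq> V" using term_leaf leafV by blast
  then show ?thesis using finite_subset finV by blast
qed

lemma dim_lower:
  assumes res: "resolving V E W"
  shows "Q \<le> card W"
proof -
  have WV: "W \<subseteq> V" using res[unfolded resolving_def] by blast
  have finW: "finite W" using finite_subset[OF WV finV] .
  define F where "F u = {x\<in>Terms u. leg x u \<inter> W \<noteq> {}}" for u
  have finF: "finite (F u)" for u
  proof -
    have "F u \<subseteq> Terms u" unfolding F_def by blast
    then show ?thesis using finite_subset[OF _ finTerms] by blast
  qed
  have cF: "ter V E u - 1 \<le> card (F u)" for u
  proof -
    have le1: "card (Terms u - F u) \<le> 1"
    proof (rule ccontr)
      assume "\<not> ?thesis"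
      then have c2: "card (Terms u - F u) \<ge> 2" by simp
      have fi: "finite (Terms u - F u)" using finTerms by simp
      obtain x y where xy: "x \<in> Terms u - F u" "y \<in> Terms u - F u" "x \<noteq> y"
        using card_ge2_obtain[OF fi c2] by blast
      then have "terminal V E u x" "terminal V E u y" "leg x u \<inter> W = {}" "leg y u \<inter> W = {}"
        unfolding F_def by auto
      then show False using lb_pair[OF res _ _ xy(3)] by blast
    qed
    have eq: "(Terms u - F u) \<union> F u = Terms u" unfolding F_def by blast
    have "card (Terms u) \<le> card (Terms u - F u) + card (F u)"
      using card_Un_le[of "Terms u - F u" "F u"] unfolding eq .
    then show ?thesis using le1 unfolding ter_def by linarith
  qed
  have disj: "\<forall>u\<in>Maj. \<forall>u'\<in>Maj. u \<noteq> u' \<longrightarrow> F u \<inter> F u' = {}"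
  proof (intro ballI impI)
    fix u u' :: 'a assume "u \<noteq> u'"
    show "F u \<inter> F u' = {}"
    proof (rule ccontr)
      assume "F u \<inter> F u' \<noteq> {}"
      then obtain x where "terminal V E u x" "terminal V E u' x" unfolding F_def by blast
      then show False using term_unique \<open>u \<noteq> u'\<close> by blast
    qed
  qed
  have "Q \<le> (\<Sum>u\<in>Maj. card (F u))" unfolding Q_def by (rule sum_mono) (rule cF)
  also have "\<dots> = card (\<Union>u\<in>Maj. F u)" using card_UN_disjoint[OF finMaj _ disj] finF by simp
  also have "\<dots> \<le> card W"
  proof -
    let ?U = "\<Union>u\<in>Maj. F u"
    define g where "g x = (SOME w. w \<in> W \<and> (\<exists>u. terminal V E u x \<and> w \<in> leg x u))" for x
    have gx: "g x \<in> W \<and> (\<exists>u. terminal V E u x \<and> g x \<in> leg x u)" if "x \<in> ?U" for x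
    proof -
      have "\<exists>w. w \<in> W \<and> (\<exists>u. terminal V E u x \<and> w \<in> leg x u)" using that unfolding F_def by blast
      then show ?thesis unfolding g_def by (rule someI_ex)
    qed
    have "inj_on g ?U"
    proof
      fix x y assume xU: "x \<in> ?U" and yU: "y \<in> ?U" and e: "g x = g y"
      show "x = y"
      proof (rule ccontr)
        assume xy: "x \<noteq> y"
        obtain u where u: "terminal V E u x" "g x \<in> leg x u" using gx xU by blast
        obtain u' where u': "terminal V E u' y" "g y \<in> leg y u'" using gx yU by blast
        have "g x \<in> V" "btw x (g x) u" "g x \<noteq> u" "btw y (g x) u'" "g x \<noteq> u'"
          using u(2) u'(2) e leg_iff by auto
        then show False using legs_disjoint[OF u(1) u'(1) xy, of "g x"] by blast
      qed
    qed
    moreover have "g ` ?U \<subseteq> W" using gx by blast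
    ultimately show ?thesis using card_inj_on_le finW by blast
  qed
  finally show ?thesis .
qed

end


context tr
begin

definition good where
  "good W \<longleftrightarrow> W \<subseteq> V \<and> (\<forall>u x y. terminal V E u x \<and> terminal V E u y \<and> x \<noteq> y \<longrightarrow>
      leg x u \<inter> W \<noteq> {} \<or> leg y u \<inter> W \<noteq> {})"

lemma adj_diff': assumes "E a b" "v \<in> V" shows "d v b = d v a + 1 \<or> d v a = d v b + 1"
proof -
  have V: "a \<in> V" "b \<in> V" using EV assms by auto
  have "d b v = d a v + 1 \<or> d a v = d b v + 1" using adj_diff assms by blast
  moreover have "d b v = d v b" "d a v = d v a" using d_sym V assms by auto
  ultimately show ?thesis by simp
qed

lemma H_ext:
  assumes ab: "E a b" and V: "v \<in> V" "z \<in> V" and hv: "d v b = d v a + 1" and bz: "d b v + d v z = d b z"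
  shows "d z b = d z a + 1"
proof -
  have abV: "a \<in> V" "b \<in> V" using EV ab by auto
  have "d z a \<le> d z v + d v a" using d_tri V abV by auto
  moreover have "d b v = d v b" "d b z = d z b" "d v z = d z v" using d_sym V abV by auto
  ultimately have "d z a < d z b" using hv bz by linarith
  then show ?thesis using adj_diff'[OF ab V(2)] by linarith
qed

lemma far_leaf:
  assumes bV: "b \<in> V" and v0: "v0 \<in> V" "v0 \<noteq> b"
  shows "\<exists>l. l \<in> V \<and> btw b v0 l \<and> leaf V E l \<and> (\<forall>z\<in>V. btw b v0 z \<longrightarrow> d b z \<le> d b l)"
proof -
  let ?S = "{z\<in>V. btw b v0 z}"
  have fin: "finite ?S" using finite_subset[OF _ finV, of ?S] by blast
  have "v0 \<in> ?S" using v0 d_refl by simp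
  then have ne: "?S \<noteq> {}" by blast
  obtain l where l: "l \<in> ?S" "\<forall>z\<in>?S. d b z \<le> d b l" using fin_argmax[OF fin ne, of "d b"] by blast
  have lV: "l \<in> V" and bl: "btw b v0 l" using l(1) by auto
  have "d b v0 \<noteq> 0" using d_0 bV v0 by metis
  then have lb: "l \<noteq> b" using bl d_refl bV by auto
  obtain t where t: "E l t" "d t b + 1 = d l b" using next_hop[OF lV bV lb] by blast
  have "z = t" if lz: "E l z" for z
  proof -
    have zV: "z \<in> V" using EV lz by auto
    have ad: "d z b = d l b + 1 \<or> d l b = d z b + 1" using adj_diff lz bV by blast
    have "\<not> d z b = d l b + 1"
    proof
      assume zb: "d z b = d l b + 1"
      have "d v0 z \<le> d v0 l + d l z" "d b z \<le> d b v0 + d v0 z" using d_tri v0 lV zV bV by auto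
      moreover have "d l z = 1" using d_edge lz by simp
      moreover have "d z b = d b z" "d l b = d b l" using d_sym zV lV bV by auto
      ultimately have "btw b v0 z" using zb bl by linarith
      then have "d b z \<le> d b l" using l(2) zV by blast
      then show False using zb \<open>d z b = d b z\<close> \<open>d l b = d b l\<close> by linarith
    qed
    then have "d z b < d l b" using ad by linarith
    moreover have "d t b < d l b" using t by linarith
    ultimately show ?thesis using hop_unique[OF lz t(1) bV] by blast
  qed
  then have "leaf V E l" using leaf_intro[OF lV t(1)] by blast
  then show ?thesis using lV bl l(2) by blast
qed

lemma half:
  assumes ab: "E a b" and g: "good W" and nW: "\<forall>w\<in>W. d w b \<noteq> d w a + 1"
  shows "\<forall>u. major V E u \<longrightarrow> d u b \<noteq> d u a + 1"
proof (rule ccontr)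
  assume "\<not> ?thesis"
  then have ex: "\<exists>u. major V E u \<and> d u b = d u a + 1" by blast
  have abV: "a \<in> V" "b \<in> V" using EV ab by auto
  let ?M = "{u\<in>V. major V E u \<and> d u b = d u a + 1}"
  have fin: "finite ?M" using finite_subset[OF _ finV, of ?M] by blast
  have ne: "?M \<noteq> {}" using ex majorV by blast
  obtain u where u: "u \<in> ?M" "\<forall>z\<in>?M. d z b \<le> d u b" using fin_argmax[OF fin ne, of "\<lambda>z. d z b"] by blast
  have uV: "u \<in> V" and mu: "major V E u" and hu: "d u b = d u a + 1" using u(1) by auto
  have ub: "u \<noteq> b" using hu d_refl abV by auto
  obtain t where t: "E u t" "d t b + 1 = d u b" using next_hop[OF uV abV(2) ub] by blast
  have WV: "W \<subseteq> V" using g unfolding good_def by blast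
  have branch: "\<exists>l. terminal V E u l \<and> leg l u \<inter> W = {} \<and> d n l + 1 = d u l"
    if un: "E u n" "n \<noteq> t" for n
  proof -
    have nV: "n \<in> V" using EV un by auto
    have ad: "d n b = d u b + 1 \<or> d u b = d n b + 1" using adj_diff un(1) abV by blast
    have "\<not> d u b = d n b + 1"
    proof
      assume "d u b = d n b + 1"
      then have "n = t" using hop_unique[OF un(1) t(1) abV(2)] t by linarith
      then show False using un by blast
    qed
    then have nb: "d n b = d u b + 1" using ad by blast
    have dun: "d u n = 1" using d_edge un(1) by simp
    have sy1: "d b u = d u b" "d b n = d n b" using d_sym uV nV abV by auto
    have bun: "btw b u n" using nb dun sy1 by linarith
    have nb': "n \<noteq> b" using nb d_refl abV by auto
    obtain l where l: "l \<in> V" "btw b n l" "leaf V E l" using far_leaf[OF abV(2) nV nb'] by blast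
    have tr1: "btw b u l \<and> btw u n l" using btw_trans[OF abV(2) uV nV l(1) bun l(2)] .
    have sy2: "d l u = d u l" "d u b = d b u" "d l b = d b l" using d_sym l(1) uV abV by auto
    have lub: "btw l u b" using tr1 sy2 by linarith
    have inner: "d v b = d v a + 1 \<and> d u b < d v b" if vV: "v \<in> V" "btw l v u" "v \<noteq> u" for v
    proof -
      have "btw l v b \<and> btw v u b" using btw_trans[OF l(1) vV(1) uV abV(2) vV(2) lub] .
      moreover have "d v u \<noteq> 0" using d_0 vV uV by blast
      moreover have "d v a \<le> d v u + d u a" using d_tri vV uV abV by auto
      ultimately have "d v a < d v b" "d u b < d v b" using hu by linarith+
      then show ?thesis using adj_diff'[OF ab vV(1)] by linarith
    qed
    have "\<not> major V E v" if "v \<in> V" "btw l v u" "v \<noteq> u" for v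
    proof
      assume "major V E v"
      then have "v \<in> ?M" using inner that by blast
      then show False using u(2) inner that by fastforce
    qed
    then have tl: "terminal V E u l" using term_intro[OF l(3) mu] by blast
    have "leg l u \<inter> W = {}"
    proof (rule ccontr)
      assume "leg l u \<inter> W \<noteq> {}"
      then obtain v where v: "v \<in> leg l u" "v \<in> W" by blast
      have "v \<in> V" "btw l v u" "v \<noteq> u" using v(1) leg_iff by auto
      then have "d v b = d v a + 1" using inner by blast
      then show False using nW v(2) by blast
    qed
    moreover have "d n l + 1 = d u l" using tr1 dun by linarith
    ultimately show ?thesis using tl by blast
  qed
  obtain n1 n2 where n: "E u n1" "E u n2" "n1 \<noteq> n2" "n1 \<noteq> t" "n2 \<noteq> t" using major_two[OF mu] by blast
  obtain l1 where l1: "terminal V E u l1" "leg l1 u \<inter> W = {}" "d n1 l1 + 1 = d u l1"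
    using branch n by blast
  obtain l2 where l2: "terminal V E u l2" "leg l2 u \<inter> W = {}" "d n2 l2 + 1 = d u l2"
    using branch n by blast
  have l12: "l1 \<noteq> l2"
  proof
    assume e: "l1 = l2"
    have l1V: "l1 \<in> V" using l1(1) term_leaf leafV by blast
    have "d n2 l1 + 1 = d u l1" using l2(3) e by simp
    then have "d n1 l1 < d u l1" "d n2 l1 < d u l1" using l1(3) by linarith+
    then have "n1 = n2" using hop_unique[OF n(1) n(2) l1V] by blast
    then show False using n by blast
  qed
  show False using g l1 l2 l12 unfolding good_def by blast
qed

lemma side:
  assumes ab: "E a b" and cb: "E c b" and ac: "a \<noteq> c"
    and na: "\<forall>u. major V E u \<longrightarrow> d u b \<noteq> d u a + 1"
    and nc: "\<forall>u. major V E u \<longrightarrow> d u b \<noteq> d u c + 1"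
    and exm: "\<exists>u. major V E u"
  shows "\<exists>l. terminal V E b l \<and> d l b = d l a + 1 \<and> (\<forall>v\<in>leg l b. d v b = d v a + 1)"
proof -
  have V: "a \<in> V" "b \<in> V" "c \<in> V" using EV ab cb by auto
  have abn: "a \<noteq> b" using ab Ene by blast
  obtain l where l: "l \<in> V" "btw b a l" "leaf V E l" using far_leaf[OF V(2) V(1) abn] by blast
  have dab: "d b a = 1" using d_edge ab Esym by auto
  have sy: "d b l = d l b" "d a l = d l a" using d_sym l(1) V by auto
  have hl: "d l b = d l a + 1" using l(2) dab sy by linarith
  obtain u where tu: "terminal V E u l" using ex_terminal[OF l(3) exm] by blast
  have mu: "major V E u" using tu term_major by blast
  have uV: "u \<in> V" using mu majorV by blast
  have "d u b \<noteq> d u a + 1" using na mu by blast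
  then have ua: "d u a = d u b + 1" using adj_diff'[OF ab uV] by blast
  have "d l u = d l a + 1 + d b u" using cut[OF ab l(1) uV hl ua] .
  then have lbu: "btw l b u" using hl by linarith
  have ueq: "u = b"
  proof (rule ccontr)
    assume ub: "u \<noteq> b"
    have nmb: "\<not> major V E b" using term_nm[OF tu V(2) lbu] ub by blast
    have bu: "b \<noteq> u" using ub by blast
    obtain h where h: "E b h" "d h u + 1 = d b u" using next_hop[OF V(2) uV bu] by blast
    have "h = a \<or> h = c" using deg2_nbrs[OF nmb _ _ ac h(1)] ab cb Esym by blast
    moreover have "h \<noteq> a"
    proof
      assume "h = a"
      then have "d a u + 1 = d b u" using h by simp
      moreover have "d a u = d u a" "d b u = d u b" using d_sym V uV by auto
      ultimately show False using ua by linarith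
    qed
    moreover have "h \<noteq> c"
    proof
      assume "h = c"
      then have e1: "d c u + 1 = d b u" using h by simp
      have "d u b \<noteq> d u c + 1" using nc mu by blast
      then have "d u c = d u b + 1" using adj_diff'[OF cb uV] by blast
      moreover have "d c u = d u c" "d b u = d u b" using d_sym V uV by auto
      ultimately show False using e1 by linarith
    qed
    ultimately show False by blast
  qed
  have tb: "terminal V E b l" using tu ueq by simp
  have "d v b = d v a + 1" if v: "v \<in> leg l b" for v
  proof (rule ccontr)
    assume nv: "d v b \<noteq> d v a + 1"
    have vV: "v \<in> V" and bv: "btw l v b" and vb: "v \<noteq> b" using v leg_iff by auto
    have "d v a = d v b + 1" using adj_diff'[OF ab vV] nv by blast
    then have "d l v = d l a + 1 + d b v" using cut[OF ab l(1) vV hl] by blast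
    moreover have "d b v = d v b" using d_sym vV V by auto
    ultimately have "d b v = 0" using bv hl by linarith
    then show False using d_0 V vV vb by metis
  qed
  then show ?thesis using tb hl by blast
qed

end


context tr
begin

lemma resolve:
  assumes g: "good W" and exm: "\<exists>u. major V E u"
  shows "resolving V E W"
proof -
  have WV: "W \<subseteq> V" using g unfolding good_def by blast
  have "\<exists>w\<in>W. d w x \<noteq> d w y" if xV: "x \<in> V" "y \<in> V" "x \<noteq> y" for x y
  proof (rule ccontr)
    assume "\<not> ?thesis"
    then have eqW: "\<forall>w\<in>W. d w x = d w y" by blast
    define k where "k = d x y"
    have k1: "k \<ge> 1" using d_0 xV unfolding k_def by (metis less_one not_le)
    have "\<exists>j. k = 2*j+1 \<or> k = 2*j+2" using k1 by presburger
    then obtain j where j: "k = 2*j+1 \<or> k = 2*j+2" by blast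
    have jk: "j + 1 \<le> d x y" using j unfolding k_def by linarith
    obtain b where b: "b \<in> V" "d x b = j + 1" "d b y + (j + 1) = k"
      using geo_point[OF xV(1,2) jk] unfolding k_def by blast
    have bx: "b \<noteq> x" using b d_refl xV by auto
    obtain a where a: "E b a" "d a x + 1 = d b x" using next_hop[OF b(1) xV(1) bx] by blast
    have aV: "a \<in> V" using EV a by auto
    have sy1: "d a x = d x a" "d b x = d x b" "d a y = d y a" "d b y = d y b" using d_sym aV b(1) xV by auto
    have xa: "d x a = j" using a b sy1 by linarith
    have "d a y \<le> d a b + d b y" "d x y \<le> d x a + d a y" using d_tri aV b(1) xV by auto
    moreover have "d a b = 1" using d_edge a Esym by auto
    ultimately have ay: "d a y = k - j" using xa b unfolding k_def by linarith
    have ab: "E a b" using a Esym by blast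
    have hy: "d y a = d y b + 1" using ay b sy1 j by linarith
    have claimA: "d v x < d v y" if vV: "v \<in> V" "d v b = d v a + 1" for v
    proof -
      have "d v y = d v a + 1 + d b y" using cut[OF ab vV(1) xV(2) vV(2) hy] .
      moreover have "d v x \<le> d v a + d a x" using d_tri vV aV xV by auto
      ultimately show ?thesis using b sy1 xa j by linarith
    qed
    have nA: "\<forall>w\<in>W. d w b \<noteq> d w a + 1" using claimA eqW WV by fastforce
    have noA: "\<forall>u. major V E u \<longrightarrow> d u b \<noteq> d u a + 1" using half[OF ab g nA] .
    show False
    proof (cases "k = 2*j+1")
      case True
      have hx: "d x b = d x a + 1" using xa b by linarith
      have claimB: "d v y < d v x" if vV: "v \<in> V" "d v a = d v b + 1" for v
      proof -
        have "d v x = d v b + 1 + d a x" using cut[OF a(1) vV(1) xV(1) vV(2) hx] .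
        moreover have "d v y \<le> d v b + d b y" using d_tri vV b(1) xV by auto
        ultimately show ?thesis using b sy1 xa True by linarith
      qed
      have nB: "\<forall>w\<in>W. d w a \<noteq> d w b + 1" using claimB eqW WV by fastforce
      have noB: "\<forall>u. major V E u \<longrightarrow> d u a \<noteq> d u b + 1" using half[OF a(1) g nB] .
      obtain u where mu: "major V E u" using exm by blast
      have uV: "u \<in> V" using mu majorV by blast
      show False using adj_diff'[OF ab uV] noA noB mu by blast
    next
      case False
      then have kj: "k = 2*j+2" using j by blast
      have by': "b \<noteq> y" using b d_refl xV kj by auto
      obtain c where c: "E b c" "d c y + 1 = d b y" using next_hop[OF b(1) xV(2) by'] by blast
      have cV: "c \<in> V" using EV c by auto
      have sy2: "d c x = d x c" "d c y = d y c" using d_sym cV xV by auto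
      have "d x c \<le> d x b + d b c" "d x y \<le> d x c + d c y" using d_tri cV b(1) xV by auto
      moreover have "d b c = 1" using d_edge c by auto
      ultimately have xc: "d x c = j + 2" using b c kj unfolding k_def by linarith
      have cb: "E c b" using c Esym by blast
      have hx: "d x c = d x b + 1" using xc b by linarith
      have claimC: "d v y < d v x" if vV: "v \<in> V" "d v b = d v c + 1" for v
      proof -
        have "d v x = d v c + 1 + d b x" using cut[OF cb vV(1) xV(1) vV(2) hx] .
        moreover have "d v y \<le> d v c + d c y" using d_tri vV cV xV by auto
        ultimately show ?thesis using b c sy1 sy2 kj by linarith
      qed
      have nC: "\<forall>w\<in>W. d w b \<noteq> d w c + 1" using claimC eqW WV by fastforce
      have noC: "\<forall>u. major V E u \<longrightarrow> d u b \<noteq> d u c + 1" using half[OF cb g nC] .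
      have ac: "a \<noteq> c" using xa xc by auto
      obtain l1 where l1: "terminal V E b l1" "d l1 b = d l1 a + 1" "\<forall>v\<in>leg l1 b. d v b = d v a + 1"
        using side[OF ab cb ac noA noC exm] by blast
      obtain l2 where l2: "terminal V E b l2" "d l2 b = d l2 c + 1" "\<forall>v\<in>leg l2 b. d v b = d v c + 1"
        using side[OF cb ab ac[symmetric] noC noA exm] by blast
      have l12: "l1 \<noteq> l2"
      proof
        assume e: "l1 = l2"
        have l1V: "l1 \<in> V" using l1(1) term_leaf leafV by blast
        have "d l1 b = d l1 c + 1" using l2(2) e by simp
        moreover have "d a l1 = d l1 a" "d c l1 = d l1 c" "d b l1 = d l1 b" using d_sym l1V aV cV b(1) by auto
        ultimately have "d a l1 < d b l1" "d c l1 < d b l1" using l1(2) by linarith+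
        then have "a = c" using hop_unique[OF a(1) c(1) l1V] by blast
        then show False using ac by blast
      qed
      have "leg l1 b \<inter> W = {}" using l1(3) nA by blast
      moreover have "leg l2 b \<inter> W = {}" using l2(3) nC by blast
      ultimately show False using g l1(1) l2(1) l12 unfolding good_def by blast
    qed
  qed
  then show ?thesis unfolding resolving_def using WV by blast
qed

lemma constr:
  assumes f: "\<And>x u. terminal V E u x \<Longrightarrow> f x \<in> leg x u"
    and t: "\<And>u. major V E u \<Longrightarrow> Terms u \<noteq> {} \<Longrightarrow> terminal V E u (t u)"
  defines "W \<equiv> {f x | x. \<exists>u. terminal V E u x \<and> x \<noteq> t u}"
  shows "good W \<and> card W \<le> Q"
proof -
  have legV: "leg x u \<subseteq> V" for x u unfolding leg_def by blast
  have WV: "W \<subseteq> V"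
  proof
    fix w assume "w \<in> W"
    then obtain x u where "w = f x" "terminal V E u x" unfolding W_def by blast
    then show "w \<in> V" using f legV by blast
  qed
  have "leg x u \<inter> W \<noteq> {} \<or> leg y u \<inter> W \<noteq> {}"
    if tx: "terminal V E u x" and ty: "terminal V E u y" and xy: "x \<noteq> y" for u x y
  proof (cases "x = t u")
    case True
    then have "y \<noteq> t u" using xy by blast
    then have "f y \<in> W" unfolding W_def using ty by blast
    then show ?thesis using f[OF ty] by blast
  next
    case False
    then have "f x \<in> W" unfolding W_def using tx by blast
    then show ?thesis using f[OF tx] by blast
  qed
  then have g: "good W" unfolding good_def using WV by blast
  have Weq: "W = (\<Union>u\<in>Maj. f ` (Terms u - {t u}))"
  proof
    show "W \<subseteq> (\<Union>u\<in>Maj. f ` (Terms u - {t u}))"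
    proof
      fix w assume "w \<in> W"
      then obtain x u where xu: "w = f x" "terminal V E u x" "x \<noteq> t u" unfolding W_def by blast
      then have "u \<in> Maj" using term_major by blast
      moreover have "x \<in> Terms u - {t u}" using xu by blast
      ultimately show "w \<in> (\<Union>u\<in>Maj. f ` (Terms u - {t u}))" using xu(1) by blast
    qed
    show "(\<Union>u\<in>Maj. f ` (Terms u - {t u})) \<subseteq> W"
    proof
      fix w assume "w \<in> (\<Union>u\<in>Maj. f ` (Terms u - {t u}))"
      then obtain u x where "w = f x" "terminal V E u x" "x \<noteq> t u" by blast
      then show "w \<in> W" unfolding W_def by blast
    qed
  qed
  have "card W \<le> (\<Sum>u\<in>Maj. card (f ` (Terms u - {t u})))"
    unfolding Weq by (rule card_UN_le[OF finMaj])
  also have "\<dots> \<le> (\<Sum>u\<in>Maj. ter V E u - 1)"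
  proof (rule sum_mono)
    fix u assume uM: "u \<in> Maj"
    have "card (f ` (Terms u - {t u})) \<le> card (Terms u - {t u})" by (rule card_image_le) (simp add: finTerms)
    also have "\<dots> = ter V E u - 1"
    proof (cases "Terms u = {}")
      case True then show ?thesis unfolding ter_def True by simp
    next
      case False
      then have "t u \<in> Terms u" using t uM by blast
      then show ?thesis unfolding ter_def by (simp add: card_Diff_singleton)
    qed
    finally show "card (f ` (Terms u - {t u})) \<le> ter V E u - 1" .
  qed
  finally show ?thesis using g unfolding Q_def by blast
qed

lemma dim_eq:
  assumes exm: "\<exists>u. major V E u"
  shows "metric_dim V E = Q"
proof -
  define t where "t u = (SOME x. terminal V E u x)" for u
  have t: "terminal V E u (t u)" if "major V E u" "Terms u \<noteq> {}" for u
  proof -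
    have "\<exists>x. terminal V E u x" using that by blast
    then show ?thesis unfolding t_def by (rule someI_ex)
  qed
  have f: "\<And>x u. terminal V E u x \<Longrightarrow> (\<lambda>x. x) x \<in> leg x u" using leg_self by simp
  note c = constr[of "\<lambda>x. x" t, OF f t]
  define W where "W = {(\<lambda>x. x) x | x. \<exists>u. terminal V E u x \<and> x \<noteq> t u}"
  have gW: "good W" "card W \<le> Q" using c unfolding W_def by auto
  have rW: "resolving V E W" using resolve[OF gW(1) exm] .
  have ex: "\<exists>S. resolving V E S \<and> card S = card W" using rW by blast
  have le: "metric_dim V E \<le> card W" unfolding metric_dim_def by (rule Least_le) (rule ex)
  have ex2: "\<exists>k S. resolving V E S \<and> card S = k" using rW by blast
  have "\<exists>S. resolving V E S \<and> card S = metric_dim V E"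
    unfolding metric_dim_def by (rule LeastI_ex) (rule ex2)
  then obtain S where S: "resolving V E S" "card S = metric_dim V E" by blast
  have "Q \<le> metric_dim V E" using dim_lower[OF S(1)] S(2) by simp
  then show ?thesis using le gW by linarith
qed

end


locale ntr = tr +
  assumes np: "\<not> is_path_graph V E"
begin

lemma exm: "\<exists>u. major V E u" using ex_major np by blast

abbreviation SS where "SS \<equiv> strong_supports V E"
abbreviation Lf where "Lf s \<equiv> {x. leaf V E x \<and> E s x}"

lemma SS_iff: "s \<in> SS \<longleftrightarrow> strong_support V E s" unfolding strong_supports_def by simp

lemma SS_Maj: "SS \<subseteq> Maj" using ss_major np SS_iff by blast

lemma finSS: "finite SS" using finite_subset[OF SS_Maj finMaj] .

lemma finLf: "finite (Lf s)"
proof -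
  have "Lf s \<subseteq> V" using leafV by blast
  then show ?thesis using finite_subset finV by blast
qed

lemma Lf2: "s \<in> SS \<Longrightarrow> card (Lf s) \<ge> 2" using SS_iff unfolding strong_support_def by blast

lemma Lf_Terms:
  assumes mu: "major V E s"
  shows "Lf s \<subseteq> Terms s"
proof
  fix x assume "x \<in> Lf s"
  then have lx: "leaf V E x" and ex: "E s x" by auto
  have xV: "x \<in> V" using lx leafV by blast
  have sV: "s \<in> V" using mu majorV by blast
  have "\<not> major V E v" if "v \<in> V" "btw x v s" "v \<noteq> s" for v
  proof -
    have "d x s = 1" using d_edge ex Esym by auto
    moreover have "d v s \<noteq> 0" using d_0 that sV by blast
    ultimately have "d x v = 0" using that by linarith
    then have "v = x" using d_0 xV that by blast
    then show ?thesis using leaf_not_major lx by blast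
  qed
  then show "x \<in> Terms s" using term_intro[OF lx mu] by blast
qed

definition R where "R = ell' V E - card SS"

lemma ell_sum: "ell' V E = (\<Sum>s\<in>SS. card (Lf s))"
proof -
  have eq: "{x. leaf V E x \<and> (\<exists>s. strong_support V E s \<and> E s x)} = (\<Union>s\<in>SS. Lf s)"
    unfolding strong_supports_def by blast
  have disj: "\<forall>s\<in>SS. \<forall>s'\<in>SS. s \<noteq> s' \<longrightarrow> Lf s \<inter> Lf s' = {}"
  proof (intro ballI impI)
    fix s s' :: 'a assume "s \<noteq> s'"
    show "Lf s \<inter> Lf s' = {}"
    proof (rule ccontr)
      assume "Lf s \<inter> Lf s' \<noteq> {}"
      then obtain x where x: "leaf V E x" "E s x" "E s' x" by blast
      have "E x s" "E x s'" using x Esym by blast+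
      then have "s = s'" using leaf_unique[OF x(1)] by blast
      then show False using \<open>s \<noteq> s'\<close> by blast
    qed
  qed
  have "card (\<Union>s\<in>SS. Lf s) = (\<Sum>s\<in>SS. card (Lf s))"
    by (rule card_UN_disjoint[OF finSS _ disj]) (simp add: finLf)
  then show ?thesis unfolding ell'_def eq .
qed

lemma R_sum: "R = (\<Sum>s\<in>SS. card (Lf s) - 1)"
proof -
  have "(\<Sum>s\<in>SS. card (Lf s) - 1 + 1) = (\<Sum>s\<in>SS. card (Lf s) - 1) + (\<Sum>s\<in>SS. 1)"
    by (rule sum.distrib)
  then have "(\<Sum>s\<in>SS. card (Lf s) - 1) + card SS = (\<Sum>s\<in>SS. card (Lf s) - 1 + 1)"
    by simp
  also have "\<dots> = (\<Sum>s\<in>SS. card (Lf s))"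
  proof (rule sum.cong)
    fix s assume "s \<in> SS"
    then have "card (Lf s) \<ge> 2" by (rule Lf2)
    then show "card (Lf s) - 1 + 1 = card (Lf s)" by simp
  qed simp
  finally have "(\<Sum>s\<in>SS. card (Lf s) - 1) + card SS = ell' V E" unfolding ell_sum .
  then show ?thesis unfolding R_def by linarith
qed

definition gR where "gR u = (if u \<in> SS then card (Lf u) - 1 else 0)"

lemma R_Maj: "R = (\<Sum>u\<in>Maj. gR u)"
proof -
  have "(\<Sum>u\<in>Maj. gR u) = (\<Sum>u\<in>Maj \<inter> SS. card (Lf u) - 1)"
    unfolding gR_def by (rule sum.inter_restrict[OF finMaj, symmetric])
  also have "Maj \<inter> SS = SS" using SS_Maj by blast
  finally show ?thesis using R_sum by simp
qed

lemma gR_le: "u \<in> Maj \<Longrightarrow> gR u \<le> ter V E u - 1"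
proof -
  assume "u \<in> Maj"
  then have "Lf u \<subseteq> Terms u" using Lf_Terms by blast
  then have "card (Lf u) \<le> ter V E u" unfolding ter_def by (rule card_mono[OF finTerms])
  then show ?thesis unfolding gR_def by (simp add: diff_le_mono)
qed

abbreviation C3 where "C3 \<equiv> (\<forall>u. exterior_major V E u \<and> ter V E u \<ge> 2 \<longrightarrow>
                    (\<forall>x. terminal V E u x \<longrightarrow> E u x))"

lemma C3_pointwise: "C3 \<longleftrightarrow> (\<forall>u\<in>Maj. gR u = ter V E u - 1)"
proof
  assume c3: C3
  show "\<forall>u\<in>Maj. gR u = ter V E u - 1"
  proof
    fix u assume uM: "u \<in> Maj"
    have uV: "u \<in> V" using uM majorV by blast
    have sub: "Lf u \<subseteq> Terms u" using Lf_Terms uM by blast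
    show "gR u = ter V E u - 1"
    proof (cases "ter V E u \<ge> 2")
      case True
      then have "exterior_major V E u" using uM unfolding exterior_major_def by simp
      then have imp: "\<forall>x. terminal V E u x \<longrightarrow> E u x" using c3 True by blast
      have "Terms u \<subseteq> Lf u"
      proof
        fix x assume "x \<in> Terms u"
        then have "terminal V E u x" by simp
        then show "x \<in> Lf u" using imp term_leaf by blast
      qed
      then have eq: "Lf u = Terms u" using sub by blast
      then have "card (Lf u) \<ge> 2" using True unfolding ter_def by simp
      then have "u \<in> SS" using SS_iff uV unfolding strong_support_def by blast
      then show ?thesis unfolding gR_def ter_def eq by simp
    next
      case False
      have "u \<notin> SS"
      proof
        assume "u \<in> SS"
        then have "card (Lf u) \<ge> 2" using Lf2 by blast
        moreover have "card (Lf u) \<le> ter V E u" unfolding ter_def by (rule card_mono[OF finTerms sub])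
        ultimately show False using False by linarith
      qed
      then show ?thesis unfolding gR_def using False by simp
    qed
  qed
next
  assume pw: "\<forall>u\<in>Maj. gR u = ter V E u - 1"
  show C3
  proof (rule ccontr)
    assume "\<not> C3"
    then obtain u x where u: "exterior_major V E u" "ter V E u \<ge> 2" "terminal V E u x" "\<not> E u x" by blast
    have uM: "u \<in> Maj" using u unfolding exterior_major_def by blast
    have sub: "Lf u \<subseteq> Terms u" using Lf_Terms uM by blast
    have "x \<in> Terms u - Lf u" using u by blast
    then have "Lf u \<subset> Terms u" using sub by blast
    then have "card (Lf u) < ter V E u" unfolding ter_def by (rule psubset_card_mono[OF finTerms])
    then have "card (Lf u) - 1 < ter V E u - 1" using u(2) by linarith
    then have "gR u < ter V E u - 1" unfolding gR_def using u(2) by simp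
    then show False using pw uM by simp
  qed
qed

lemma C3_RQ: "C3 \<longleftrightarrow> R = Q"
proof
  assume C3
  then have "\<forall>u\<in>Maj. gR u = ter V E u - 1" using C3_pointwise by blast
  then show "R = Q" unfolding R_Maj Q_def by (intro sum.cong) auto
next
  assume RQ: "R = Q"
  show C3
  proof (rule ccontr)
    assume "\<not> C3"
    then obtain u where u: "u \<in> Maj" "gR u \<noteq> ter V E u - 1" using C3_pointwise by blast
    then have "gR u < ter V E u - 1" using gR_le[OF u(1)] by linarith
    have "\<forall>x\<in>Maj. gR x \<le> ter V E x - 1" using gR_le by blast
    moreover have "\<exists>a\<in>Maj. gR a < ter V E a - 1" using u(1) \<open>gR u < ter V E u - 1\<close> by blast
    ultimately have "(\<Sum>u\<in>Maj. gR u) < (\<Sum>u\<in>Maj. ter V E u - 1)"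
      by (rule sum_strict_mono_ex1[OF finMaj])
    then show False using RQ unfolding R_Maj Q_def by simp
  qed
qed

lemma C2C3: "(metric_dim V E = ell' V E - card SS) \<longleftrightarrow> C3"
  using dim_eq[OF exm] C3_RQ unfolding R_def by auto

end


context ntr
begin

abbreviation C4 where "C4 \<equiv> (\<forall>x y p. leaf V E x \<and> leaf V E y \<and> dist V E x y > 2 \<and>
                    path_between V E x y p \<longrightarrow> card {v \<in> set p. major V E v} \<ge> 2)"

lemma C3_C4: "C3 \<Longrightarrow> C4"
proof (intro allI impI)
  fix x y p
  assume c3: C3 and h: "leaf V E x \<and> leaf V E y \<and> d x y > 2 \<and> path_between V E x y p"
  have lx: "leaf V E x" and ly: "leaf V E y" and dxy: "d x y > 2" and pb: "path_between V E x y p"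
    using h by auto
  have V: "x \<in> V" "y \<in> V" using lx ly leafV by blast+
  have xy: "x \<noteq> y" using dxy d_refl V by auto
  obtain u where tu: "terminal V E u x" using ex_terminal[OF lx exm] by blast
  obtain u' where tu': "terminal V E u' y" using ex_terminal[OF ly exm] by blast
  have uV: "u \<in> V" "u' \<in> V" using tu tu' term_major majorV by blast+
  have sp: "set p = {v\<in>V. btw x v y}" using path_set[OF pb] .
  have b1: "btw x u y" using term_btw[OF tu ly] xy by blast
  have b2: "btw y u' x" using term_btw[OF tu' lx] xy by blast
  have "d y u' = d u' y" "d u' x = d x u'" "d y x = d x y" using d_sym V uV by auto
  then have b2': "btw x u' y" using b2 by linarith
  have fin: "finite {v \<in> set p. major V E v}" by simp
  have in1: "u \<in> {v \<in> set p. major V E v}" using sp b1 uV term_major[OF tu] by blast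
  have in2: "u' \<in> {v \<in> set p. major V E v}" using sp b2' uV term_major[OF tu'] by blast
  show "card {v \<in> set p. major V E v} \<ge> 2"
  proof (cases "u = u'")
    case False
    have "{u, u'} \<subseteq> {v \<in> set p. major V E v}" using in1 in2 by blast
    then have "card {u, u'} \<le> card {v \<in> set p. major V E v}" by (rule card_mono[OF fin])
    then show ?thesis using False by simp
  next
    case True
    have tu2: "terminal V E u y" using tu' True by simp
    have "{x, y} \<subseteq> Terms u" using tu tu2 by blast
    then have "card {x, y} \<le> ter V E u" unfolding ter_def by (rule card_mono[OF finTerms])
    then have t2: "ter V E u \<ge> 2" using xy by simp
    then have "exterior_major V E u" using term_major[OF tu] unfolding exterior_major_def by simp
    then have "E u x" "E u y" using c3 t2 tu tu2 by blast+
    then have "d u x = 1" "d u y = 1" using d_edge by auto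
    moreover have "d x y \<le> d x u + d u y" using d_tri V uV by auto
    moreover have "d x u = d u x" using d_sym V uV by auto
    ultimately show ?thesis using dxy by linarith
  qed
qed

lemma C4_C3: "C4 \<Longrightarrow> C3"
proof (rule ccontr)
  assume c4: C4 and "\<not> C3"
  then obtain u x where u: "exterior_major V E u" "ter V E u \<ge> 2" "terminal V E u x" "\<not> E u x" by blast
  have mu: "major V E u" using u unfolding exterior_major_def by blast
  have fT: "finite (Terms u - {x})" using finTerms by simp
  have "card (Terms u - {x}) \<ge> 1" using u(2,3) unfolding ter_def by (simp add: card_Diff_singleton)
  then have "Terms u - {x} \<noteq> {}" by (metis card.empty not_one_le_zero)
  then obtain y where ty: "terminal V E u y" and xy: "x \<noteq> y" by blast
  have lx: "leaf V E x" and ly: "leaf V E y" using u(3) ty term_leaf by blast+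
  have V: "x \<in> V" "y \<in> V" "u \<in> V" using lx ly mu leafV majorV by blast+
  have ux: "u \<noteq> x" "u \<noteq> y" using lx ly mu leaf_not_major by blast+
  have "d x u \<noteq> 0" using d_0 V ux by metis
  moreover have "d x u \<noteq> 1" using d_1 V u(4) Esym by blast
  ultimately have dxu: "d x u \<ge> 2" by linarith
  have "d u y \<noteq> 0" using d_0 V ux by metis
  moreover have b: "btw x u y" using term_btw[OF u(3) ly] xy by blast
  ultimately have dxy: "d x y > 2" using dxu by linarith
  obtain p where pb: "path_between V E x y p" using shortest_path V by blast
  have "card {v \<in> set p. major V E v} \<ge> 2" using c4 lx ly dxy pb by blast
  moreover have "{v \<in> set p. major V E v} \<subseteq> {u}"
  proof
    fix v assume "v \<in> {v \<in> set p. major V E v}"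
    then have vp: "v \<in> set p" and mv: "major V E v" by auto
    have vV: "v \<in> V" using mv majorV by blast
    have bv: "btw x v y" using path_set[OF pb] vp by blast
    show "v \<in> {u}"
    proof (rule ccontr)
      assume "v \<notin> {u}"
      then have vu: "v \<noteq> u" by simp
      have n1: "\<not> (btw x v u \<and> v \<noteq> u)" using term_nm[OF u(3) vV] mv by blast
      have n2: "\<not> (btw y v u \<and> v \<noteq> u)" using term_nm[OF ty vV] mv by blast
      have "btw x u v" using term_follow[OF u(3) vV n1 V(3)] d_refl V by simp
      moreover have "btw y u v" using term_follow[OF ty vV n2 V(3)] d_refl V by simp
      moreover have "d v y = d y v" "d y u = d u y" using d_sym vV V by auto
      moreover have "d u v \<noteq> 0" using d_0 vV V vu by metis
      ultimately show False using bv b by linarith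
    qed
  qed
  then have "card {v \<in> set p. major V E v} \<le> 1"
    using card_mono[of "{u}" "{v \<in> set p. major V E v}"] by simp
  ultimately show False by simp
qed

end


context tr
begin

lemma res_mono: "resolving V E S \<Longrightarrow> S \<subseteq> T \<Longrightarrow> T \<subseteq> V \<Longrightarrow> resolving V E T"
  unfolding resolving_def by blast

lemma dom_mono: "dominating V E S \<Longrightarrow> S \<subseteq> T \<Longrightarrow> T \<subseteq> V \<Longrightarrow> dominating V E T"
  unfolding dominating_def by blast

lemma res_V: "resolving V E V"
proof -
  have "\<exists>u\<in>V. d u x \<noteq> d u y" if "x \<in> V" "y \<in> V" "x \<noteq> y" for x y
  proof -
    have "d x x = 0" using d_refl that by simp
    moreover have "d x y \<noteq> 0" using d_0 that by blast
    ultimately show ?thesis using that by metis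
  qed
  then show ?thesis unfolding resolving_def by blast
qed

lemma dom_V: "dominating V E V" unfolding dominating_def by blast

lemma gam_ex: "\<exists>D. dominating V E D \<and> card D = domination_number V E"
proof -
  have "\<exists>k D. dominating V E D \<and> card D = k" using dom_V by blast
  then show ?thesis unfolding domination_number_def by (rule LeastI_ex)
qed

lemma gam_le: "dominating V E D \<Longrightarrow> domination_number V E \<le> card D"
  unfolding domination_number_def by (rule Least_le) blast

lemma mld_ex: "\<exists>S. resolving V E S \<and> dominating V E S \<and> card S = mld_number V E"
proof -
  have "\<exists>k S. resolving V E S \<and> dominating V E S \<and> card S = k" using dom_V res_V by blast
  then show ?thesis unfolding mld_number_def by (rule LeastI_ex)
qed

lemma mld_le: "resolving V E S \<Longrightarrow> dominating V E S \<Longrightarrow> mld_number V E \<le> card S"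
  unfolding mld_number_def by (rule Least_le) blast

lemma dim_ex: "\<exists>S. resolving V E S \<and> card S = metric_dim V E"
proof -
  have "\<exists>k S. resolving V E S \<and> card S = k" using res_V by blast
  then show ?thesis unfolding metric_dim_def by (rule LeastI_ex)
qed

lemma mld_upper: "mld_number V E \<le> metric_dim V E + domination_number V E"
proof -
  obtain S where S: "resolving V E S" "card S = metric_dim V E" using dim_ex by blast
  obtain D where D: "dominating V E D" "card D = domination_number V E" using gam_ex by blast
  have SV: "S \<subseteq> V" using S(1) unfolding resolving_def by blast
  have DV: "D \<subseteq> V" using D(1) unfolding dominating_def by blast
  have "resolving V E (S \<union> D)" using res_mono[OF S(1)] SV DV by blast
  moreover have "dominating V E (S \<union> D)" using dom_mono[OF D(1)] SV DV by blast
  ultimately have "mld_number V E \<le> card (S \<union> D)" using mld_le by blast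
  also have "\<dots> \<le> card S + card D" by (rule card_Un_le)
  finally show ?thesis using S D by simp
qed

end

context ntr
begin

lemma leaf_dist_s:
  assumes l: "leaf V E l" "E s l" and wV: "w \<in> V" and wl: "w \<noteq> l"
  shows "d w l = d w s + 1"
proof -
  have lV: "l \<in> V" using l leafV by blast
  have sV: "s \<in> V" using EV l by blast
  obtain h where h: "E l h" "d h w + 1 = d l w" using next_hop[OF lV wV] wl by metis
  have "h = s" using leaf_unique[OF l(1) h(1)] l(2) Esym by blast
  then have "d s w + 1 = d l w" using h by simp
  moreover have "d s w = d w s" "d l w = d w l" using d_sym sV lV wV by auto
  ultimately show ?thesis by simp
qed

lemma mld_lower:
  assumes res: "resolving V E S" and dom: "dominating V E S"
  shows "domination_number V E + R \<le> card S"
proof -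
  have SV: "S \<subseteq> V" using res unfolding resolving_def by blast
  have finS: "finite S" using finite_subset[OF SV finV] .
  define L where "L = (\<Union>s\<in>SS. Lf s)"
  have nL: "s \<notin> L" if "s \<in> SS" for s
  proof
    assume "s \<in> L"
    then have "leaf V E s" unfolding L_def by blast
    moreover have "major V E s" using SS_Maj that by blast
    ultimately show False using leaf_not_major by blast
  qed
  have a: "card (Lf s) \<le> card (Lf s \<inter> S) + 1" if sS: "s \<in> SS" for s
  proof -
    have le1: "card (Lf s - S) \<le> 1"
    proof (rule ccontr)
      assume "\<not> ?thesis"
      then have c2: "card (Lf s - S) \<ge> 2" by simp
      have fi: "finite (Lf s - S)" using finLf by simp
      obtain l1 l2 where l: "l1 \<in> Lf s - S" "l2 \<in> Lf s - S" "l1 \<noteq> l2"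
        using card_ge2_obtain[OF fi c2] by blast
      have lV: "l1 \<in> V" "l2 \<in> V" using l leafV by blast+
      obtain w where w: "w \<in> S" "d w l1 \<noteq> d w l2" using res[unfolded resolving_def] lV l(3) by blast
      have wV: "w \<in> V" using SV w by blast
      have "d w l1 = d w s + 1" using leaf_dist_s[of l1 s w] l(1) wV w(1) by blast
      moreover have "d w l2 = d w s + 1" using leaf_dist_s[of l2 s w] l(2) wV w(1) by blast
      ultimately show False using w by simp
    qed
    have eq: "(Lf s \<inter> S) \<union> (Lf s - S) = Lf s" by blast
    have "card (Lf s) \<le> card (Lf s \<inter> S) + card (Lf s - S)"
      using card_Un_le[of "Lf s \<inter> S" "Lf s - S"] unfolding eq .
    then show ?thesis using le1 by linarith
  qed
  have b: "Lf s \<subseteq> S" if "s \<notin> S" for s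
  proof
    fix l assume l: "l \<in> Lf s"
    show "l \<in> S"
    proof (rule ccontr)
      assume "l \<notin> S"
      moreover have "l \<in> V" using l leafV by blast
      ultimately obtain w where "w \<in> S" "E l w" using dom[unfolded dominating_def] by blast
      moreover have "E l s" using l Esym by blast
      ultimately have "w = s" using leaf_unique l by blast
      then show False using \<open>w \<in> S\<close> that by blast
    qed
  qed
  define h where "h s = card (Lf s) - 1 + (if s \<in> S then 0 else 1)" for s
  have hle: "h s \<le> card (Lf s \<inter> S)" if "s \<in> SS" for s
  proof (cases "s \<in> S")
    case True then show ?thesis using a[OF that] unfolding h_def by simp
  next
    case False
    then have "Lf s \<inter> S = Lf s" using b by blast
    moreover have "card (Lf s) \<ge> 2" using Lf2 that by blast
    ultimately show ?thesis unfolding h_def using False by simp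
  qed
  have sum_h: "(\<Sum>s\<in>SS. h s) = R + card (SS - S)"
  proof -
    have "(\<Sum>s\<in>SS. h s) = (\<Sum>s\<in>SS. card (Lf s) - 1) + (\<Sum>s\<in>SS. (if s \<in> S then 0 else 1))"
      unfolding h_def by (rule sum.distrib)
    moreover have "(\<Sum>s\<in>SS. (if s \<in> S then 0 else 1::nat)) = card (SS - S)"
    proof -
      have "(\<Sum>s\<in>SS. (if s \<in> - S then 1 else 0::nat)) = (\<Sum>s\<in>SS \<inter> - S. 1)"
        by (rule sum.inter_restrict[OF finSS, symmetric])
      moreover have "SS \<inter> - S = SS - S" by blast
      moreover have "(\<Sum>s\<in>SS. (if s \<in> S then 0 else 1::nat)) = (\<Sum>s\<in>SS. (if s \<in> - S then 1 else 0::nat))"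
        by (rule sum.cong) auto
      ultimately show ?thesis by simp
    qed
    ultimately show ?thesis using R_sum by simp
  qed
  have disj: "\<forall>s\<in>SS. \<forall>s'\<in>SS. s \<noteq> s' \<longrightarrow> (Lf s \<inter> S) \<inter> (Lf s' \<inter> S) = {}"
  proof (intro ballI impI)
    fix s s' :: 'a assume "s \<noteq> s'"
    show "(Lf s \<inter> S) \<inter> (Lf s' \<inter> S) = {}"
    proof (rule ccontr)
      assume "(Lf s \<inter> S) \<inter> (Lf s' \<inter> S) \<noteq> {}"
      then obtain x where x: "leaf V E x" "E s x" "E s' x" by blast
      have "E x s" "E x s'" using x Esym by blast+
      then have "s = s'" using leaf_unique[OF x(1)] by blast
      then show False using \<open>s \<noteq> s'\<close> by blast
    qed
  qed
  have SL: "S \<inter> L = (\<Union>s\<in>SS. Lf s \<inter> S)" unfolding L_def by blast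
  have cSL: "card (S \<inter> L) = (\<Sum>s\<in>SS. card (Lf s \<inter> S))"
    unfolding SL by (rule card_UN_disjoint[OF finSS _ disj]) (simp add: finLf)
  have "(\<Sum>s\<in>SS. h s) \<le> (\<Sum>s\<in>SS. card (Lf s \<inter> S))" by (rule sum_mono) (rule hle)
  then have k1: "R + card (SS - S) \<le> card (S \<inter> L)" using sum_h cSL by simp
  have k2: "card S = card (S - L) + card (S \<inter> L)"
  proof -
    have "(S - L) \<union> (S \<inter> L) = S" by blast
    moreover have "(S - L) \<inter> (S \<inter> L) = {}" by blast
    ultimately show ?thesis using card_Un_disjoint[of "S - L" "S \<inter> L"] finS by simp
  qed
  define S2 where "S2 = (S - L) \<union> (SS - S)"
  have SSV: "SS \<subseteq> V" using SS_Maj majorV by blast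
  have S2V: "S2 \<subseteq> V" unfolding S2_def using SV SSV by blast
  have domS2: "dominating V E S2"
  proof -
    have "\<exists>u\<in>S2. E x u" if xV: "x \<in> V" and xS: "x \<notin> S2" for x
    proof (cases "x \<in> L")
      case True
      then obtain s where s: "s \<in> SS" "x \<in> Lf s" unfolding L_def by blast
      have "s \<in> S2"
      proof (cases "s \<in> S")
        case True then show ?thesis using nL[OF s(1)] unfolding S2_def by blast
      next
        case False then show ?thesis using s(1) unfolding S2_def by blast
      qed
      moreover have "E x s" using s(2) Esym by blast
      ultimately show ?thesis by blast
    next
      case False
      then have "x \<notin> S" using xS unfolding S2_def by blast
      then obtain w where w: "w \<in> S" "E x w" using dom[unfolded dominating_def] xV by blast
      show ?thesis
      proof (cases "w \<in> L")
        case True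
        then obtain s where s: "s \<in> SS" "w \<in> Lf s" unfolding L_def by blast
        have "E w x" "E w s" using w s Esym by blast+
        then have "x = s" using leaf_unique s(2) by blast
        then have "x \<in> S2" using s(1) \<open>x \<notin> S\<close> unfolding S2_def by blast
        then show ?thesis using xS by blast
      next
        case False
        then have "w \<in> S2" using w unfolding S2_def by blast
        then show ?thesis using w by blast
      qed
    qed
    then show ?thesis unfolding dominating_def using S2V by blast
  qed
  have "domination_number V E \<le> card S2" using gam_le[OF domS2] .
  also have "\<dots> \<le> card (S - L) + card (SS - S)" unfolding S2_def by (rule card_Un_le)
  finally show ?thesis using k1 k2 by linarith
qed

end


context ntr
begin

lemma notC3_strict:
  assumes "\<not> C3"
  shows "mld_number V E < metric_dim V E + domination_number V E"
proof -
  obtain u x where u: "exterior_major V E u" "ter V E u \<ge> 2" "terminal V E u x" "\<not> E u x"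
    using assms by blast
  have mu: "major V E u" using u unfolding exterior_major_def by blast
  have lx: "leaf V E x" using u(3) term_leaf by blast
  have V: "x \<in> V" "u \<in> V" using lx mu leafV majorV by blast+
  have xu: "x \<noteq> u" using lx mu leaf_not_major by blast
  obtain y where xy: "E x y" using leaf_nbr[OF lx] by blast
  have yV: "y \<in> V" using EV xy by blast
  have yu: "y \<noteq> u" using xy u(4) Esym by blast
  obtain n where n: "E x n" "d n u + 1 = d x u" using next_hop[OF V(1) V(2) xu] by blast
  have "n = y" using leaf_unique[OF lx n(1) xy] .
  then have "d y u + 1 = d x u" using n by simp
  moreover have "d x y = 1" using d_edge xy by simp
  ultimately have "btw x y u" by simp
  then have yleg: "y \<in> leg x u" using leg_iff yV yu by blast
  have "card (Terms u - {x}) \<ge> 1" using u(2,3) unfolding ter_def by (simp add: card_Diff_singleton)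
  then have "Terms u - {x} \<noteq> {}" by (metis card.empty not_one_le_zero)
  then obtain x' where tx': "terminal V E u x'" and xx': "x \<noteq> x'" by blast
  define t0 where "t0 v = (SOME z. terminal V E v z)" for v
  define t where "t = t0(u := x')"
  define f where "f z = (if z = x then y else z)" for z
  have f: "f z \<in> leg z v" if "terminal V E v z" for z v
  proof (cases "z = x")
    case True
    then have "v = u" using term_unique[OF that] u(3) by blast
    then show ?thesis using True yleg unfolding f_def by simp
  next
    case False then show ?thesis using leg_self[OF that] unfolding f_def by simp
  qed
  have t: "terminal V E v (t v)" if "major V E v" "Terms v \<noteq> {}" for v
  proof (cases "v = u")
    case True then show ?thesis using tx' unfolding t_def by simp
  next
    case False
    have "\<exists>z. terminal V E v z" using that by blast
    then have "terminal V E v (t0 v)" unfolding t0_def by (rule someI_ex)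
    then show ?thesis using False unfolding t_def by simp
  qed
  define W where "W = {f z | z. \<exists>v. terminal V E v z \<and> z \<noteq> t v}"
  have c: "good W \<and> card W \<le> Q" unfolding W_def by (rule constr[of f t, OF f t])
  have rW: "resolving V E W" using c resolve[OF _ exm] by simp
  have WV: "W \<subseteq> V" using rW unfolding resolving_def by blast
  have yW: "y \<in> W"
  proof -
    have "x \<noteq> t u" using xx' unfolding t_def by simp
    then have "f x \<in> W" unfolding W_def using u(3) by blast
    then show ?thesis unfolding f_def by simp
  qed
  obtain D where D: "dominating V E D" "card D = domination_number V E" using gam_ex by blast
  have DV: "D \<subseteq> V" using D(1) unfolding dominating_def by blast
  have finD: "finite D" using finite_subset[OF DV finV] .
  define D' where "D' = insert y (D - {x})"
  have D'V: "D' \<subseteq> V" unfolding D'_def using DV yV by blast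
  have yx: "y \<noteq> x" using xy Ene by blast
  have domD': "dominating V E D'"
  proof -
    have "\<exists>w\<in>D'. E v w" if vV: "v \<in> V" and vD: "v \<notin> D'" for v
    proof (cases "v = x")
      case True then show ?thesis using xy unfolding D'_def by blast
    next
      case False
      then have "v \<notin> D" using vD unfolding D'_def by blast
      then obtain w where w: "w \<in> D" "E v w" using D(1)[unfolded dominating_def] vV by blast
      have "w \<noteq> x"
      proof
        assume "w = x"
        then have "E x v" using w Esym by blast
        then have "v = y" using leaf_unique[OF lx _ xy] by blast
        then show False using vD unfolding D'_def by blast
      qed
      then have "w \<in> D'" using w unfolding D'_def by blast
      then show ?thesis using w by blast
    qed
    then show ?thesis unfolding dominating_def using D'V by blast
  qed
  have cD': "card D' \<le> card D"
  proof (cases "x \<in> D")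
    case True
    have "card D' \<le> Suc (card (D - {x}))" unfolding D'_def using finD by (simp add: card_insert_if)
    also have "\<dots> = card D"
    proof -
      have "card (D - {x}) = card D - 1" using True by (simp add: card_Diff_singleton)
      moreover have "card D > 0" using True finD card_gt_0_iff by blast
      ultimately show ?thesis by simp
    qed
    finally show ?thesis .
  next
    case False
    have "y \<in> D"
    proof (rule ccontr)
      assume "y \<notin> D"
      obtain w where w: "w \<in> D" "E x w" using D(1)[unfolded dominating_def] V(1) False by blast
      then have "w = y" using leaf_unique[OF lx _ xy] by blast
      then show False using w \<open>y \<notin> D\<close> by blast
    qed
    then have "D' = D" unfolding D'_def using False by blast
    then show ?thesis by simp
  qed
  have resT: "resolving V E (W \<union> D')" using res_mono[OF rW] WV D'V by blast
  have domT: "dominating V E (W \<union> D')" using dom_mono[OF domD'] WV D'V by blast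
  have finW: "finite W" using finite_subset[OF WV finV] .
  have finD': "finite D'" using finite_subset[OF D'V finV] .
  have "card W + card D' = card (W \<union> D') + card (W \<inter> D')" using card_Un_Int[OF finW finD'] .
  moreover have "card (W \<inter> D') \<ge> 1"
  proof -
    have "y \<in> W \<inter> D'" using yW unfolding D'_def by blast
    then have "W \<inter> D' \<noteq> {}" by blast
    then show ?thesis using finW by (simp add: Suc_le_eq card_gt_0_iff)
  qed
  moreover have "mld_number V E \<le> card (W \<union> D')" using mld_le[OF resT domT] .
  moreover have "card W \<le> metric_dim V E" using c dim_eq[OF exm] by simp
  ultimately show ?thesis using cD' D(2) by linarith
qed

lemma C1C3: "(mld_number V E = metric_dim V E + domination_number V E) \<longleftrightarrow> C3"
proof
  assume c1: "mld_number V E = metric_dim V E + domination_number V E"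
  show C3
  proof (rule ccontr)
    assume "\<not> C3"
    then show False using notC3_strict c1 by simp
  qed
next
  assume c3: C3
  have "metric_dim V E = R" using C2C3 c3 unfolding R_def by simp
  moreover obtain S where S: "resolving V E S" "dominating V E S" "card S = mld_number V E"
    using mld_ex by blast
  moreover have "domination_number V E + R \<le> card S" using mld_lower[OF S(1) S(2)] .
  ultimately have "metric_dim V E + domination_number V E \<le> mld_number V E" by simp
  then show "mld_number V E = metric_dim V E + domination_number V E" using mld_upper by simp
qed

end

theorem theorem3:
  fixes V :: "'a set" and E :: "'a \<Rightarrow> 'a \<Rightarrow> bool"
  assumes "tree V E" and "\<not> is_path_graph V E"
  defines "C1 \<equiv> (mld_number V E = metric_dim V E + domination_number V E)"
      and "C2 \<equiv> (metric_dim V E = ell' V E - card (strong_supports V E))"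
      and "C3 \<equiv> (\<forall>u. exterior_major V E u \<and> ter V E u \<ge> 2 \<longrightarrow>
                    (\<forall>x. terminal V E u x \<longrightarrow> E u x))"
      and "C4 \<equiv> (\<forall>x y p. leaf V E x \<and> leaf V E y \<and> dist V E x y > 2 \<and>
                    path_between V E x y p \<longrightarrow> card {v \<in> set p. major V E v} \<ge> 2)"
  shows "(C1 \<longleftrightarrow> C2) \<and> (C2 \<longleftrightarrow> C3) \<and> (C3 \<longleftrightarrow> C4)"
proof -
  interpret ntr V E
  proof
    show "tree V E" using assms(1) .
    show "\<not> is_path_graph V E" using assms(2) .
  qed
  have a: "C1 \<longleftrightarrow> C3" unfolding C1_def C3_def using C1C3 .
  have b: "C2 \<longleftrightarrow> C3" unfolding C2_def C3_def using C2C3 .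
  have c: "C3 \<longleftrightarrow> C4" unfolding C3_def C4_def using C3_C4 C4_C3 by blast
  show ?thesis using a b c by blast
qed


end
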